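(* Let $\Lambda$ be a finite coordinatewise-irreducible $k$-graph with path groupoid $\mathcal{G}$, let $r\in(0,\infty)^k$, and let $c:\mathcal{G}\to\mathbb{R}$ be the cocycle $c(x,n,y)=r\cdot n$. Suppose $\mu$ is a nonzero Borel probability measure on $\mathcal{G}^{(0)}=W_\Lambda$ which is quasi-invariant with Radon–Nikodym cocycle $e^{-c}$. Then: (1) $r_i\ge\ln\rho(A_i)$ for all $1\le i\le k$; (2) for $l\in\{1,\dots,k\}$, if $\mu\big(\bigcup_{\{n\in(\mathbb{N}\cup\{\infty\})^k:\,n_l=\infty\}}\Lambda^n\big)\ne0$ then $r_l=\ln\rho(A_l)$; in particular, if $\mu(\Lambda^\infty)\neq0$ then $r_i=\ln\rho(A_i)$ for all $i$.
   Context: $\Lambda$ is a $k$-graph (countable category with degree functor $d:\Lambda\to\mathbb{N}^k$ satisfying the factorisation property); finite: each $d^{-1}(n)$ finite. Vertex matrices $A_i(v,w)=|v\Lambda^{e_i}w|$, spectral radii $\rho(A_i)$; coordinatewise irreducible: every $A_i$ irreducible. Paths: for $n\in(\mathbb{N}\cup\{\infty\})^k$, $\Lambda^n$ = degree-preserving functors from $\Omega_{k,n}$ (morphisms $(p,q)$, $p\le q\le n$) to $\Lambda$; $\Lambda^\infty=\Lambda^{(\infty,\dots,\infty)}$; $W_\Lambda=\bigcup_n\Lambda^n$ with $Z(\lambda)=\{x: d(\lambda)\le d(x),x(0,d(\lambda))=\lambda\}$ and topology with basis $Z(\lambda)\setminus\bigcup_{\alpha\in G}Z(\lambda\alpha)$.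 Shift $\sigma^n(x)(p,q)=x(p+n,q+n)$. Path groupoid $\mathcal{G}=\{(x,p-q,y): p\le d(x), q\le d(y), \sigma^p(x)=\sigma^q(y)\}$ with $r(x,g,y)=x$, $s(x,g,y)=y$, $(x,g,y)(y,h,z)=(x,g+h,z)$, topologised with basis of compact open bisections $Z(\lambda*\eta\setminus G)$ (where $Z(\lambda*\eta)=\{(x,d(\lambda)-d(\eta),y): x\in Z(\lambda), y\in Z(\eta), \sigma^{d(\lambda)}(x)=\sigma^{d(\eta)}(y)\}$), making it an étale groupoid. A measure $\mu$ on $\mathcal{G}^{(0)}$ is quasi-invariant with Radon–Nikodym cocycle $e^{-c}$ if for every open bisection $U\subset\mathcal{G}$, $\mu(r(U))=\int_{s(U)}e^{-c(g_x)}\,d\mu(x)$, where $g_x$ is the unique element of $U$ with $s(g_x)=x$; e.g. $\mu(Z(\lambda))=e^{-r\cdot d(\lambda)}\mu(Z(s(\lambda)))$. *)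

theory Defs
  imports "HOL-Analysis.Abstract_Topology" "HOL-Probability.Probability_Measure"
    "HOL-Library.Extended_Nat" "Jordan_Normal_Form.Spectral_Radius"
begin

text \<open>A k-graph is presented by its set of morphisms L, source and range maps
  (objects are identified with their identity morphisms), a partial composition
  (defined when src lam = rng mu) and a degree functor into 'k => nat, where the
  finite type 'k indexes the coordinates 1..k.\<close>

definition kgraph ::
  "'m set \<Rightarrow> ('m \<Rightarrow> 'm) \<Rightarrow> ('m \<Rightarrow> 'm) \<Rightarrow> ('m \<Rightarrow> 'm \<Rightarrow> 'm) \<Rightarrow> ('m \<Rightarrow> ('k::finite \<Rightarrow> nat)) \<Rightarrow> bool" where
  "kgraph L src rng cmp deg \<longleftrightarrow>
     countable L \<and>
     (\<forall>l\<in>L. src l \<in> L \<and> rng l \<in> L \<and> src (src l) = src l \<and> rng (src l) = src l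
              \<and> src (rng l) = rng l \<and> rng (rng l) = rng l) \<and>
     (\<forall>l\<in>L. \<forall>m\<in>L. src l = rng m \<longrightarrow>
        cmp l m \<in> L \<and> rng (cmp l m) = rng l \<and> src (cmp l m) = src m) \<and>
     (\<forall>l\<in>L. cmp (rng l) l = l \<and> cmp l (src l) = l) \<and>
     (\<forall>l\<in>L. \<forall>m\<in>L. \<forall>n\<in>L. src l = rng m \<and> src m = rng n \<longrightarrow>
        cmp (cmp l m) n = cmp l (cmp m n)) \<and>
     (\<forall>l\<in>L. \<forall>m\<in>L. src l = rng m \<longrightarrow> deg (cmp l m) = (\<lambda>j. deg l j + deg m j)) \<and>
     (\<forall>l\<in>L. \<forall>m n. deg l = (\<lambda>j. m j + n j) \<longrightarrow>
        (\<exists>!(a, b). a \<in> L \<and> b \<in> L \<and> src a = rng b \<and> deg a = m \<and> deg b = n \<and> cmp a b = l))"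

definition finite_kgraph :: "'m set \<Rightarrow> ('m \<Rightarrow> ('k::finite \<Rightarrow> nat)) \<Rightarrow> bool" where
  "finite_kgraph L deg \<longleftrightarrow> (\<forall>n. finite {l\<in>L. deg l = n})"

definition unit_deg :: "'k \<Rightarrow> ('k \<Rightarrow> nat)" where
  "unit_deg i = (\<lambda>j. if j = i then 1 else 0)"

definition vertices :: "'m set \<Rightarrow> ('m \<Rightarrow> 'm) \<Rightarrow> 'm set" where
  "vertices L src = {v\<in>L. src v = v}"

definition vlist :: "'m set \<Rightarrow> ('m \<Rightarrow> 'm) \<Rightarrow> 'm list" where
  "vlist L src = (SOME vs. distinct vs \<and> set vs = vertices L src)"

definition vertex_matrix ::
  "'m set \<Rightarrow> ('m \<Rightarrow> 'm) \<Rightarrow> ('m \<Rightarrow> 'm) \<Rightarrow> ('m \<Rightarrow> ('k::finite \<Rightarrow> nat)) \<Rightarrow> 'k \<Rightarrow> 'a::semiring_1 mat" where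
  "vertex_matrix L src rng deg i =
     (let vs = vlist L src in
      Matrix.mat (length vs) (length vs)
        (\<lambda>(a, b). of_nat (card {l\<in>L. rng l = vs ! a \<and> deg l = unit_deg i \<and> src l = vs ! b})))"

definition irreducible_mat :: "real mat \<Rightarrow> bool" where
  "irreducible_mat M \<longleftrightarrow>
     (\<forall>a<dim_row M. \<forall>b<dim_row M. \<exists>n\<ge>1. (M ^\<^sub>m n) $$ (a, b) > 0)"

definition coord_irreducible ::
  "'m set \<Rightarrow> ('m \<Rightarrow> 'm) \<Rightarrow> ('m \<Rightarrow> 'm) \<Rightarrow> ('m \<Rightarrow> ('k::finite \<Rightarrow> nat)) \<Rightarrow> bool" where
  "coord_irreducible L src rng deg \<longleftrightarrow> (\<forall>i. irreducible_mat (vertex_matrix L src rng deg i))"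

definition rho :: "'m set \<Rightarrow> ('m \<Rightarrow> 'm) \<Rightarrow> ('m \<Rightarrow> 'm) \<Rightarrow> ('m \<Rightarrow> ('k::finite \<Rightarrow> nat)) \<Rightarrow> 'k \<Rightarrow> real" where
  "rho L src rng deg i = spectral_radius (vertex_matrix L src rng deg i)"

definition le_edeg :: "('k \<Rightarrow> nat) \<Rightarrow> ('k \<Rightarrow> enat) \<Rightarrow> bool" where
  "le_edeg p n \<longleftrightarrow> (\<forall>j. enat (p j) \<le> n j)"

text \<open>A path of degree n is a degree-preserving functor from Omega_{k,n}, recorded as the
  pair (n, x) where x (p,q) is the image of the morphism (p,q), p <= q <= n
  (and undefined elsewhere). The object p is sent to (the identity) x (p,p).\<close>
definition is_path ::
  "'m set \<Rightarrow> ('m \<Rightarrow> 'm) \<Rightarrow> ('m \<Rightarrow> 'm) \<Rightarrow> ('m \<Rightarrow> 'm \<Rightarrow> 'm) \<Rightarrow> ('m \<Rightarrow> ('k::finite \<Rightarrow> nat))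
    \<Rightarrow> ('k \<Rightarrow> enat) \<Rightarrow> (('k \<Rightarrow> nat) \<times> ('k \<Rightarrow> nat) \<Rightarrow> 'm) \<Rightarrow> bool" where
  "is_path L src rng cmp deg n x \<longleftrightarrow>
     (\<forall>p q. p \<le> q \<and> le_edeg q n \<longrightarrow>
        x (p, q) \<in> L \<and> deg (x (p, q)) = (\<lambda>j. q j - p j)
        \<and> rng (x (p, q)) = x (p, p) \<and> src (x (p, q)) = x (q, q)) \<and>
     (\<forall>p. le_edeg p n \<longrightarrow> src (x (p, p)) = x (p, p)) \<and>
     (\<forall>p q t. p \<le> q \<and> q \<le> t \<and> le_edeg t n \<longrightarrow> cmp (x (p, q)) (x (q, t)) = x (p, t)) \<and>
     (\<forall>p q. \<not> (p \<le> q \<and> le_edeg q n) \<longrightarrow> x (p, q) = undefined)"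

type_synonym ('k, 'm) kpath = "('k \<Rightarrow> enat) \<times> (('k \<Rightarrow> nat) \<times> ('k \<Rightarrow> nat) \<Rightarrow> 'm)"

definition WL ::
  "'m set \<Rightarrow> ('m \<Rightarrow> 'm) \<Rightarrow> ('m \<Rightarrow> 'm) \<Rightarrow> ('m \<Rightarrow> 'm \<Rightarrow> 'm) \<Rightarrow> ('m \<Rightarrow> ('k::finite \<Rightarrow> nat))
    \<Rightarrow> ('k, 'm) kpath set" where
  "WL L src rng cmp deg = {(n, x). is_path L src rng cmp deg n x}"

definition cylZ ::
  "'m set \<Rightarrow> ('m \<Rightarrow> 'm) \<Rightarrow> ('m \<Rightarrow> 'm) \<Rightarrow> ('m \<Rightarrow> 'm \<Rightarrow> 'm) \<Rightarrow> ('m \<Rightarrow> ('k::finite \<Rightarrow> nat))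
    \<Rightarrow> 'm \<Rightarrow> ('k, 'm) kpath set" where
  "cylZ L src rng cmp deg l =
     {y\<in>WL L src rng cmp deg. le_edeg (deg l) (fst y) \<and> snd y ((\<lambda>_. 0), deg l) = l}"

definition basisW ::
  "'m set \<Rightarrow> ('m \<Rightarrow> 'm) \<Rightarrow> ('m \<Rightarrow> 'm) \<Rightarrow> ('m \<Rightarrow> 'm \<Rightarrow> 'm) \<Rightarrow> ('m \<Rightarrow> ('k::finite \<Rightarrow> nat))
    \<Rightarrow> ('k, 'm) kpath set set" where
  "basisW L src rng cmp deg =
     {cylZ L src rng cmp deg l - (\<Union>a\<in>G. cylZ L src rng cmp deg (cmp l a)) | l G.
        l \<in> L \<and> finite G \<and> G \<subseteq> {a\<in>L. rng a = src l}}"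

definition topW ::
  "'m set \<Rightarrow> ('m \<Rightarrow> 'm) \<Rightarrow> ('m \<Rightarrow> 'm) \<Rightarrow> ('m \<Rightarrow> 'm \<Rightarrow> 'm) \<Rightarrow> ('m \<Rightarrow> ('k::finite \<Rightarrow> nat))
    \<Rightarrow> ('k, 'm) kpath topology" where
  "topW L src rng cmp deg = topology_generated_by (basisW L src rng cmp deg)"

definition shift :: "('k \<Rightarrow> nat) \<Rightarrow> ('k, 'm) kpath \<Rightarrow> ('k, 'm) kpath" where
  "shift m y =
     (let n' = (\<lambda>j. fst y j - enat (m j)) in
      (n', \<lambda>(p, q). if p \<le> q \<and> le_edeg q n' then snd y ((\<lambda>j. p j + m j), (\<lambda>j. q j + m j))
                    else undefined))"

type_synonym ('k, 'm) garrow = "('k, 'm) kpath \<times> ('k \<Rightarrow> int) \<times> ('k, 'm) kpath"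

definition path_groupoid ::
  "'m set \<Rightarrow> ('m \<Rightarrow> 'm) \<Rightarrow> ('m \<Rightarrow> 'm) \<Rightarrow> ('m \<Rightarrow> 'm \<Rightarrow> 'm) \<Rightarrow> ('m \<Rightarrow> ('k::finite \<Rightarrow> nat))
    \<Rightarrow> ('k, 'm) garrow set" where
  "path_groupoid L src rng cmp deg =
     {(x, g, y). x \<in> WL L src rng cmp deg \<and> y \<in> WL L src rng cmp deg \<and>
        (\<exists>p q. le_edeg p (fst x) \<and> le_edeg q (fst y) \<and> shift p x = shift q y
               \<and> g = (\<lambda>j. int (p j) - int (q j)))}"

definition Zstar ::
  "'m set \<Rightarrow> ('m \<Rightarrow> 'm) \<Rightarrow> ('m \<Rightarrow> 'm) \<Rightarrow> ('m \<Rightarrow> 'm \<Rightarrow> 'm) \<Rightarrow> ('m \<Rightarrow> ('k::finite \<Rightarrow> nat))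
    \<Rightarrow> 'm \<Rightarrow> 'm \<Rightarrow> ('k, 'm) garrow set" where
  "Zstar L src rng cmp deg l e =
     {(x, g, y). x \<in> cylZ L src rng cmp deg l \<and> y \<in> cylZ L src rng cmp deg e \<and>
        shift (deg l) x = shift (deg e) y \<and> g = (\<lambda>j. int (deg l j) - int (deg e j))}"

definition basisG ::
  "'m set \<Rightarrow> ('m \<Rightarrow> 'm) \<Rightarrow> ('m \<Rightarrow> 'm) \<Rightarrow> ('m \<Rightarrow> 'm \<Rightarrow> 'm) \<Rightarrow> ('m \<Rightarrow> ('k::finite \<Rightarrow> nat))
    \<Rightarrow> ('k, 'm) garrow set set" where
  "basisG L src rng cmp deg =
     {{(x, g, y) \<in> Zstar L src rng cmp deg l e. x \<notin> (\<Union>a\<in>G. cylZ L src rng cmp deg (cmp l a))}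
        | l e G. l \<in> L \<and> e \<in> L \<and> src l = src e \<and> finite G \<and> G \<subseteq> {a\<in>L. rng a = src l}}"

definition topG ::
  "'m set \<Rightarrow> ('m \<Rightarrow> 'm) \<Rightarrow> ('m \<Rightarrow> 'm) \<Rightarrow> ('m \<Rightarrow> 'm \<Rightarrow> 'm) \<Rightarrow> ('m \<Rightarrow> ('k::finite \<Rightarrow> nat))
    \<Rightarrow> ('k, 'm) garrow topology" where
  "topG L src rng cmp deg = topology_generated_by (basisG L src rng cmp deg)"

definition g_range :: "('k, 'm) garrow \<Rightarrow> ('k, 'm) kpath" where
  "g_range g = fst g"

definition g_source :: "('k, 'm) garrow \<Rightarrow> ('k, 'm) kpath" where
  "g_source g = snd (snd g)"

definition open_bisection ::
  "'m set \<Rightarrow> ('m \<Rightarrow> 'm) \<Rightarrow> ('m \<Rightarrow> 'm) \<Rightarrow> ('m \<Rightarrow> 'm \<Rightarrow> 'm) \<Rightarrow> ('m \<Rightarrow> ('k::finite \<Rightarrow> nat))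
    \<Rightarrow> ('k, 'm) garrow set \<Rightarrow> bool" where
  "open_bisection L src rng cmp deg U \<longleftrightarrow>
     openin (topG L src rng cmp deg) U \<and> inj_on g_range U \<and> inj_on g_source U"

definition dot_cocycle :: "('k::finite \<Rightarrow> real) \<Rightarrow> ('k, 'm) garrow \<Rightarrow> real" where
  "dot_cocycle r g = (\<Sum>j\<in>UNIV. r j * real_of_int (fst (snd g) j))"

definition quasi_invariant ::
  "'m set \<Rightarrow> ('m \<Rightarrow> 'm) \<Rightarrow> ('m \<Rightarrow> 'm) \<Rightarrow> ('m \<Rightarrow> 'm \<Rightarrow> 'm) \<Rightarrow> ('m \<Rightarrow> ('k::finite \<Rightarrow> nat))
    \<Rightarrow> (('k, 'm) garrow \<Rightarrow> real) \<Rightarrow> ('k, 'm) kpath measure \<Rightarrow> bool" where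
  "quasi_invariant L src rng cmp deg c \<mu> \<longleftrightarrow>
     (\<forall>U. open_bisection L src rng cmp deg U \<longrightarrow>
        emeasure \<mu> (g_range ` U) =
          (\<integral>\<^sup>+ x. ennreal (exp (- c (THE g. g \<in> U \<and> g_source g = x))) * indicator (g_source ` U) x \<partial>\<mu>))"

definition borel_measure_on_W ::
  "'m set \<Rightarrow> ('m \<Rightarrow> 'm) \<Rightarrow> ('m \<Rightarrow> 'm) \<Rightarrow> ('m \<Rightarrow> 'm \<Rightarrow> 'm) \<Rightarrow> ('m \<Rightarrow> ('k::finite \<Rightarrow> nat))
    \<Rightarrow> ('k, 'm) kpath measure \<Rightarrow> bool" where
  "borel_measure_on_W L src rng cmp deg \<mu> \<longleftrightarrow>
     space \<mu> = WL L src rng cmp deg \<and>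
     sets \<mu> = sigma_sets (WL L src rng cmp deg) {U. openin (topW L src rng cmp deg) U}"

end

theory Submission
  imports Defs
begin


locale kg =
  fixes L :: "'m set" and src rng :: "'m \<Rightarrow> 'm" and cmp :: "'m \<Rightarrow> 'm \<Rightarrow> 'm"
    and deg :: "'m \<Rightarrow> ('k::finite \<Rightarrow> nat)"
  assumes KG: "kgraph L src rng cmp deg"
begin

lemma src_in: "l \<in> L \<Longrightarrow> src l \<in> L" and rng_in: "l \<in> L \<Longrightarrow> rng l \<in> L"
  and src_src: "l \<in> L \<Longrightarrow> src (src l) = src l" and rng_src: "l \<in> L \<Longrightarrow> rng (src l) = src l"
  and src_rng: "l \<in> L \<Longrightarrow> src (rng l) = rng l" and rng_rng: "l \<in> L \<Longrightarrow> rng (rng l) = rng l"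
  using KG unfolding kgraph_def by auto

lemma cmp_in: "l \<in> L \<Longrightarrow> m \<in> L \<Longrightarrow> src l = rng m \<Longrightarrow> cmp l m \<in> L"
  and rng_cmp: "l \<in> L \<Longrightarrow> m \<in> L \<Longrightarrow> src l = rng m \<Longrightarrow> rng (cmp l m) = rng l"
  and src_cmp: "l \<in> L \<Longrightarrow> m \<in> L \<Longrightarrow> src l = rng m \<Longrightarrow> src (cmp l m) = src m"
  and deg_cmp: "l \<in> L \<Longrightarrow> m \<in> L \<Longrightarrow> src l = rng m \<Longrightarrow> deg (cmp l m) = (\<lambda>j. deg l j + deg m j)"
  using KG unfolding kgraph_def by auto

lemma cmp_rng: "l \<in> L \<Longrightarrow> cmp (rng l) l = l" and cmp_src: "l \<in> L \<Longrightarrow> cmp l (src l) = l"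
  using KG unfolding kgraph_def by auto

lemma assoc: "l \<in> L \<Longrightarrow> m \<in> L \<Longrightarrow> n \<in> L \<Longrightarrow> src l = rng m \<Longrightarrow> src m = rng n \<Longrightarrow>
   cmp (cmp l m) n = cmp l (cmp m n)"
  using KG unfolding kgraph_def by blast

lemma fact_ex1: "l \<in> L \<Longrightarrow> deg l = (\<lambda>j. m j + n j) \<Longrightarrow>
   \<exists>!(a, b). a \<in> L \<and> b \<in> L \<and> src a = rng b \<and> deg a = m \<and> deg b = n \<and> cmp a b = l"
  using KG unfolding kgraph_def by blast

lemma fact_uniq:
  assumes "a \<in> L" "b \<in> L" "a' \<in> L" "b' \<in> L" "src a = rng b" "src a' = rng b'"
    "deg a = deg a'" "deg b = deg b'" "cmp a b = cmp a' b'"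
  shows "a = a' \<and> b = b'"
proof -
  let ?l = "cmp a b"
  have l: "?l \<in> L" using assms cmp_in by auto
  have d: "deg ?l = (\<lambda>j. deg a j + deg b j)" using assms deg_cmp by auto
  from fact_ex1[OF l d] have
    "\<forall>x y. (case x of (a1, b1) \<Rightarrow> a1 \<in> L \<and> b1 \<in> L \<and> src a1 = rng b1 \<and> deg a1 = deg a \<and> deg b1 = deg b \<and> cmp a1 b1 = ?l)
     \<longrightarrow> (case y of (a1, b1) \<Rightarrow> a1 \<in> L \<and> b1 \<in> L \<and> src a1 = rng b1 \<and> deg a1 = deg a \<and> deg b1 = deg b \<and> cmp a1 b1 = ?l)
     \<longrightarrow> x = y"
    by (metis (no_types, lifting) ex1E)
  from this[rule_format, of "(a,b)" "(a',b')"] show ?thesis using assms by auto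
qed

lemma fact_ex:
  assumes "l \<in> L" "p \<le> deg l"
  shows "\<exists>a b. a \<in> L \<and> b \<in> L \<and> src a = rng b \<and> deg a = p \<and> deg b = (\<lambda>j. deg l j - p j) \<and> cmp a b = l"
proof -
  have "deg l = (\<lambda>j. p j + (deg l j - p j))" using assms(2) by (auto simp: le_fun_def)
  from fact_ex1[OF assms(1) this] show ?thesis by auto
qed

lemma deg_rng0: "l \<in> L \<Longrightarrow> deg (rng l) = (\<lambda>_. 0)"
proof -
  assume l: "l \<in> L"
  have "deg (cmp (rng l) l) = (\<lambda>j. deg (rng l) j + deg l j)"
    using l by (simp add: deg_cmp rng_in src_rng)
  then have "\<forall>j. deg l j = deg (rng l) j + deg l j" using cmp_rng[OF l] by metis
  then show ?thesis by (auto simp: fun_eq_iff)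
qed

lemma deg_src0: "l \<in> L \<Longrightarrow> deg (src l) = (\<lambda>_. 0)"
proof -
  assume l: "l \<in> L"
  have "deg (cmp l (src l)) = (\<lambda>j. deg l j + deg (src l) j)"
    using l by (simp add: deg_cmp src_in rng_src)
  then have "\<forall>j. deg l j = deg l j + deg (src l) j" using cmp_src[OF l] by metis
  then show ?thesis by (auto simp: fun_eq_iff)
qed

lemma deg0_vertex: assumes "l \<in> L" "deg l = (\<lambda>_. 0)" shows "src l = l" "rng l = l"
proof -
  have "rng l = l \<and> l = src l"
    using fact_uniq[of "rng l" l l "src l"] assms
    by (simp add: rng_in src_in src_rng rng_src cmp_rng cmp_src deg_rng0 deg_src0)
  then show "src l = l" "rng l = l" by auto
qed

definition seg :: "'m \<Rightarrow> ('k \<Rightarrow> nat) \<Rightarrow> ('k \<Rightarrow> nat) \<Rightarrow> 'm" where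
  "seg w p q = (THE c. \<exists>a b. a \<in> L \<and> b \<in> L \<and> c \<in> L \<and> src a = rng c \<and> src c = rng b
      \<and> deg a = p \<and> deg c = (\<lambda>j. q j - p j) \<and> cmp a (cmp c b) = w)"

lemma seg_char:
  assumes "a \<in> L" "b \<in> L" "c \<in> L" "src a = rng c" "src c = rng b"
    "deg a = p" "deg c = (\<lambda>j. q j - p j)" "cmp a (cmp c b) = w"
  shows "seg w p q = c"
  unfolding seg_def
proof (rule the_equality)
  show "\<exists>a b. a \<in> L \<and> b \<in> L \<and> c \<in> L \<and> src a = rng c \<and> src c = rng b
      \<and> deg a = p \<and> deg c = (\<lambda>j. q j - p j) \<and> cmp a (cmp c b) = w" using assms by blast
next
  fix c' assume "\<exists>a b. a \<in> L \<and> b \<in> L \<and> c' \<in> L \<and> src a = rng c' \<and> src c' = rng b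
      \<and> deg a = p \<and> deg c' = (\<lambda>j. q j - p j) \<and> cmp a (cmp c' b) = w"
  then obtain a' b' where h: "a' \<in> L" "b' \<in> L" "c' \<in> L" "src a' = rng c'" "src c' = rng b'"
      "deg a' = p" "deg c' = (\<lambda>j. q j - p j)" "cmp a' (cmp c' b') = w" by blast
  have cb: "cmp c b \<in> L" "rng (cmp c b) = rng c" using assms cmp_in rng_cmp by auto
  have cb': "cmp c' b' \<in> L" "rng (cmp c' b') = rng c'" using h cmp_in rng_cmp by auto
  have dw: "deg w = (\<lambda>j. deg a j + deg (cmp c b) j)" using assms cb deg_cmp by auto
  have dw': "deg w = (\<lambda>j. deg a' j + deg (cmp c' b') j)" using h cb' deg_cmp by auto
  have "deg (cmp c b) = deg (cmp c' b')"
    using dw dw' assms h by (auto simp: fun_eq_iff)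
  then have e: "a = a' \<and> cmp c b = cmp c' b'"
    using fact_uniq[of a "cmp c b" a' "cmp c' b'"] assms h cb cb' by auto
  have "deg (cmp c b) = (\<lambda>j. deg c j + deg b j)" "deg (cmp c' b') = (\<lambda>j. deg c' j + deg b' j)"
    using assms h deg_cmp by auto
  then have "deg b = deg b'" using e assms h by (auto simp: fun_eq_iff)
  then show "c' = c" using fact_uniq[of c b c' b'] assms h e by auto
qed

lemma seg_ex:
  assumes "w \<in> L" "p \<le> q" "q \<le> deg w"
  shows "\<exists>a b. a \<in> L \<and> b \<in> L \<and> seg w p q \<in> L \<and> src a = rng (seg w p q) \<and> src (seg w p q) = rng b
      \<and> deg a = p \<and> deg (seg w p q) = (\<lambda>j. q j - p j) \<and> deg b = (\<lambda>j. deg w j - q j)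
      \<and> cmp a (cmp (seg w p q) b) = w"
proof -
  have "p \<le> deg w" using assms order_trans by blast
  from fact_ex[OF assms(1) this] obtain a b' where h: "a \<in> L" "b' \<in> L" "src a = rng b'" "deg a = p"
    "deg b' = (\<lambda>j. deg w j - p j)" "cmp a b' = w" by blast
  have "(\<lambda>j. q j - p j) \<le> deg b'" using h assms by (auto simp: le_fun_def intro: diff_le_mono)
  from fact_ex[OF h(2) this] obtain c b where g: "c \<in> L" "b \<in> L" "src c = rng b"
    "deg c = (\<lambda>j. q j - p j)" "deg b = (\<lambda>j. deg b' j - (q j - p j))" "cmp c b = b'" by blast
  have rc: "rng c = rng b'" using g rng_cmp by metis
  have sc: "seg w p q = c" using seg_char[of a b c p q w] h g rc by auto
  have "deg b = (\<lambda>j. deg w j - q j)" using g(5) h(5) assms by (auto simp: le_fun_def fun_eq_iff)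
  then show ?thesis unfolding sc using h g rc by (intro exI[of _ a] exI[of _ b]) auto
qed

lemma seg_props:
  assumes "w \<in> L" "p \<le> q" "q \<le> deg w"
  shows "seg w p q \<in> L" "deg (seg w p q) = (\<lambda>j. q j - p j)"
  using seg_ex[OF assms] by auto

lemma seg_full: "w \<in> L \<Longrightarrow> seg w (\<lambda>_. 0) (deg w) = w"
  by (rule seg_char[of "rng w" "src w"]) (auto simp: rng_in src_in src_rng rng_src deg_rng0 cmp_src cmp_rng)

lemma seg_rng:
  assumes "w \<in> L" "p \<le> q" "q \<le> deg w"
  shows "rng (seg w p q) = seg w p p"
proof -
  obtain a b where h: "a \<in> L" "b \<in> L" "seg w p q \<in> L" "src a = rng (seg w p q)" "src (seg w p q) = rng b"
      "deg a = p" "deg (seg w p q) = (\<lambda>j. q j - p j)" "cmp a (cmp (seg w p q) b) = w"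
    using seg_ex[OF assms] by blast
  let ?c = "seg w p q"
  have "rng (cmp ?c b) = rng ?c" using h rng_cmp by simp
  then have "cmp (rng ?c) (cmp ?c b) = cmp ?c b" using h cmp_rng[of "cmp ?c b"] cmp_in by simp
  then show ?thesis
    by (intro seg_char[of a "cmp ?c b", symmetric]) (use h in \<open>auto simp: rng_in cmp_in rng_cmp rng_rng deg_rng0 src_rng\<close>)
qed

lemma seg_src:
  assumes "w \<in> L" "p \<le> q" "q \<le> deg w"
  shows "src (seg w p q) = seg w q q"
proof -
  obtain a b where h: "a \<in> L" "b \<in> L" "seg w p q \<in> L" "src a = rng (seg w p q)" "src (seg w p q) = rng b"
      "deg a = p" "deg (seg w p q) = (\<lambda>j. q j - p j)" "cmp a (cmp (seg w p q) b) = w"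
    using seg_ex[OF assms] by blast
  let ?c = "seg w p q"
  have bb: "cmp (src ?c) b = b" using h cmp_rng by simp
  have e: "cmp (cmp a ?c) (cmp (src ?c) b) = w" unfolding bb using h assoc by simp
  have d: "deg (cmp a ?c) = q" using h deg_cmp assms(2) by (auto simp: le_fun_def fun_eq_iff)
  show ?thesis
    by (rule seg_char[of "cmp a ?c" b, symmetric]) (use h e d in \<open>auto simp: src_in cmp_in src_cmp src_src deg_src0 rng_rng src_rng deg_rng0 rng_in\<close>)
qed

lemma seg_vertex:
  assumes "w \<in> L" "p \<le> deg w"
  shows "src (seg w p p) = seg w p p" "rng (seg w p p) = seg w p p"
  using seg_props[OF assms(1) order_refl assms(2)] deg0_vertex by auto

lemma seg_cmp:
  assumes "w \<in> L" "p \<le> q" "q \<le> s" "s \<le> deg w"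
  shows "cmp (seg w p q) (seg w q s) = seg w p s"
proof -
  have "p \<le> s" using assms order_trans by blast
  obtain a b where h: "a \<in> L" "b \<in> L" "seg w p s \<in> L" "src a = rng (seg w p s)" "src (seg w p s) = rng b"
      "deg a = p" "deg (seg w p s) = (\<lambda>j. s j - p j)" "cmp a (cmp (seg w p s) b) = w"
    using seg_ex[OF assms(1) \<open>p \<le> s\<close> assms(4)] by blast
  let ?c = "seg w p s"
  have "(\<lambda>j. q j - p j) \<le> deg ?c" using h assms by (auto simp: le_fun_def intro: diff_le_mono)
  from fact_ex[OF h(3) this] obtain c1 c2 where g: "c1 \<in> L" "c2 \<in> L" "src c1 = rng c2"
    "deg c1 = (\<lambda>j. q j - p j)" "deg c2 = (\<lambda>j. deg ?c j - (q j - p j))" "cmp c1 c2 = ?c" by blast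
  have r1: "rng c1 = rng ?c" "src c2 = src ?c" using g rng_cmp src_cmp by metis+
  have e0: "cmp c1 (cmp c2 b) = cmp ?c b" using g r1 h assoc[of c1 c2 b] by simp
  have e1: "cmp a (cmp c1 (cmp c2 b)) = w" unfolding e0 using h by simp
  have s1: "seg w p q = c1"
    by (rule seg_char[of a "cmp c2 b"]) (use h g r1 e1 in \<open>auto simp: cmp_in rng_cmp\<close>)
  have e2: "cmp (cmp a c1) (cmp c2 b) = w" using e1 h g r1 assoc[of a c1 "cmp c2 b"] by (simp add: cmp_in rng_cmp)
  have dq: "deg (cmp a c1) = q" using h g r1 deg_cmp assms(2) by (auto simp: le_fun_def fun_eq_iff)
  have dc2: "deg c2 = (\<lambda>j. s j - q j)" using g h assms by (auto simp: le_fun_def fun_eq_iff)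
  have s2: "seg w q s = c2"
    by (rule seg_char[of "cmp a c1" b]) (use h g r1 e2 dq dc2 in \<open>auto simp: cmp_in src_cmp\<close>)
  show ?thesis using s1 s2 g by simp
qed

end


context kg begin

lemma seg_seg:
  assumes "w \<in> L" "p \<le> q" "q \<le> t" "t \<le> deg w"
  shows "seg (seg w (\<lambda>_. 0) t) p q = seg w p q"
proof -
  define C where "C = seg w (\<lambda>_. 0) t"
  let ?C = C
  obtain A B where h: "A \<in> L" "B \<in> L" "?C \<in> L" "src A = rng ?C" "src ?C = rng B"
      "deg A = (\<lambda>_. 0)" "deg ?C = (\<lambda>j. t j - 0)" "cmp A (cmp ?C B) = w"
    using seg_ex[OF assms(1) _ assms(4), of "\<lambda>_. 0"] unfolding C_def by (auto simp: le_fun_def)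
  have dC: "deg ?C = t" using h by simp
  have pq: "q \<le> deg ?C" using dC assms by simp
  obtain a1 b1 where g: "a1 \<in> L" "b1 \<in> L" "seg ?C p q \<in> L" "src a1 = rng (seg ?C p q)"
      "src (seg ?C p q) = rng b1" "deg a1 = p" "deg (seg ?C p q) = (\<lambda>j. q j - p j)"
      "cmp a1 (cmp (seg ?C p q) b1) = ?C"
    using seg_ex[OF h(3) assms(2) pq] by blast
  define c where "c = seg ?C p q"
  let ?c = c
  note g = g[folded c_def]
  have c1: "cmp ?c b1 \<in> L" "rng (cmp ?c b1) = rng ?c" "src (cmp ?c b1) = src b1"
    using g cmp_in rng_cmp src_cmp by auto
  have "src (cmp a1 (cmp c b1)) = src (cmp c b1)" by (rule src_cmp) (use g c1 in auto)
  then have sC: "src ?C = src b1" using c1 g(8) by simp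
  have "rng (cmp a1 (cmp c b1)) = rng a1" by (rule rng_cmp) (use g c1 in auto)
  then have rC: "rng ?C = rng a1" using g(8) by simp
  have bB: "src b1 = rng B" using sC h by simp
  have e1: "cmp ?C B = cmp a1 (cmp ?c (cmp b1 B))"
  proof -
    have "cmp (cmp a1 (cmp c b1)) B = cmp a1 (cmp (cmp c b1) B)"
      by (rule assoc) (use g c1 h bB in auto)
    then have "cmp ?C B = cmp a1 (cmp (cmp ?c b1) B)" using g(8) by simp
    also have "cmp (cmp ?c b1) B = cmp ?c (cmp b1 B)"
      by (rule assoc) (use g h bB in auto)
    finally show ?thesis .
  qed
  have x1: "cmp ?c (cmp b1 B) \<in> L" "rng (cmp ?c (cmp b1 B)) = rng c"
    using g h bB by (auto simp: cmp_in rng_cmp)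
  have "cmp (cmp A a1) (cmp ?c (cmp b1 B)) = cmp A (cmp a1 (cmp ?c (cmp b1 B)))"
    by (rule assoc) (use g h x1 rC in auto)
  then have e2: "w = cmp (cmp A a1) (cmp ?c (cmp b1 B))"
    using h(8) e1 by simp
  show ?thesis unfolding C_def[symmetric] c_def[symmetric]
    by (rule seg_char[of "cmp A a1" "cmp b1 B", symmetric])
       (use h g e2 rC bB x1 in \<open>auto simp: cmp_in rng_cmp src_cmp deg_cmp\<close>)
qed

lemma seg_cmp_left:
  assumes "a \<in> L" "b \<in> L" "src a = rng b" "k \<le> deg b"
  shows "seg (cmp a b) (\<lambda>_. 0) (\<lambda>j. deg a j + k j) = cmp a (seg b (\<lambda>_. 0) k)"
proof -
  obtain b0 b1 where h: "b0 \<in> L" "b1 \<in> L" "seg b (\<lambda>_. 0) k \<in> L" "src b0 = rng (seg b (\<lambda>_. 0) k)"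
      "src (seg b (\<lambda>_. 0) k) = rng b1" "deg b0 = (\<lambda>_. 0)" "deg (seg b (\<lambda>_. 0) k) = (\<lambda>j. k j - 0)"
      "cmp b0 (cmp (seg b (\<lambda>_. 0) k) b1) = b"
    using seg_ex[OF assms(2) _ assms(4), of "\<lambda>_. 0"] by (auto simp: le_fun_def)
  define c where "c = seg b (\<lambda>_. 0) k"
  let ?c = c
  note h = h[folded c_def]
  have v: "src b0 = b0" using deg0_vertex h by auto
  have cb: "cmp ?c b1 \<in> L" "rng (cmp ?c b1) = rng ?c" using h cmp_in rng_cmp by auto
  have "cmp b0 (cmp ?c b1) = cmp ?c b1" using v h cb cmp_rng[of "cmp ?c b1"] by simp
  then have bb: "b = cmp ?c b1" using h(8) by metis
  have ra: "src a = rng ?c" using assms bb cb by simp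
  have e: "cmp a b = cmp (rng a) (cmp (cmp a ?c) b1)"
    using bb h ra assoc[of a ?c b1] cmp_rng[of "cmp a (cmp c b1)"] cb assms by (simp add: cmp_in rng_cmp)
  show ?thesis unfolding c_def[symmetric]
    by (rule seg_char[of "rng a" b1])
       (use h e ra assms in \<open>auto simp: cmp_in rng_cmp src_cmp deg_cmp rng_in src_rng deg_rng0 rng_rng\<close>)
qed

lemma seg_cmp_right:
  assumes "a \<in> L" "b \<in> L" "src a = rng b" "p \<le> q" "q \<le> deg b"
  shows "seg (cmp a b) (\<lambda>j. deg a j + p j) (\<lambda>j. deg a j + q j) = seg b p q"
proof -
  obtain b0 b1 where h: "b0 \<in> L" "b1 \<in> L" "seg b p q \<in> L" "src b0 = rng (seg b p q)"
      "src (seg b p q) = rng b1" "deg b0 = p" "deg (seg b p q) = (\<lambda>j. q j - p j)"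
      "cmp b0 (cmp (seg b p q) b1) = b"
    using seg_ex[OF assms(2) assms(4) assms(5)] by blast
  define c where "c = seg b p q"
  let ?c = c
  note h = h[folded c_def]
  have cb: "cmp ?c b1 \<in> L" "rng (cmp ?c b1) = rng ?c" using h cmp_in rng_cmp by auto
  have rb: "rng b = rng b0" using h cb rng_cmp by metis
  have e: "cmp a b = cmp (cmp a b0) (cmp ?c b1)"
    using h cb rb assms assoc[of a b0 "cmp ?c b1"] by simp
  show ?thesis unfolding c_def[symmetric]
    by (rule seg_char[of "cmp a b0" b1])
       (use h e rb assms in \<open>auto simp: cmp_in src_cmp deg_cmp\<close>)
qed

abbreviation "ispath n x \<equiv> is_path L src rng cmp deg n x"

lemma le_edeg_mono: "q \<le> t \<Longrightarrow> le_edeg t n \<Longrightarrow> le_edeg q n"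
  unfolding le_edeg_def le_fun_def by (meson enat_ord_simps(1) order_trans)

lemma path_in: "ispath n x \<Longrightarrow> p \<le> q \<Longrightarrow> le_edeg q n \<Longrightarrow> x (p, q) \<in> L"
  and path_deg: "ispath n x \<Longrightarrow> p \<le> q \<Longrightarrow> le_edeg q n \<Longrightarrow> deg (x (p, q)) = (\<lambda>j. q j - p j)"
  and path_rng: "ispath n x \<Longrightarrow> p \<le> q \<Longrightarrow> le_edeg q n \<Longrightarrow> rng (x (p, q)) = x (p, p)"
  and path_src: "ispath n x \<Longrightarrow> p \<le> q \<Longrightarrow> le_edeg q n \<Longrightarrow> src (x (p, q)) = x (q, q)"
  and path_vert: "ispath n x \<Longrightarrow> le_edeg p n \<Longrightarrow> src (x (p, p)) = x (p, p)"
  and path_cmp: "ispath n x \<Longrightarrow> p \<le> q \<Longrightarrow> q \<le> t \<Longrightarrow> le_edeg t n \<Longrightarrow> cmp (x (p, q)) (x (q, t)) = x (p, t)"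
  and path_undef: "ispath n x \<Longrightarrow> \<not> (p \<le> q \<and> le_edeg q n) \<Longrightarrow> x (p, q) = undefined"
  unfolding is_path_def
  apply (meson; fail)
  apply (meson; fail)
  apply (meson; fail)
  apply (meson; fail)
  apply (meson; fail)
  apply (meson; fail)
  apply (meson; fail)
  done

lemma path_seg:
  assumes "ispath n x" "p \<le> q" "q \<le> t" "le_edeg t n"
  shows "seg (x ((\<lambda>_. 0), t)) p q = x (p, q)"
proof -
  have z: "(\<lambda>_. 0) \<le> p" by (simp add: le_fun_def)
  have pt: "p \<le> t" using assms order_trans by blast
  have lq: "le_edeg q n" using le_edeg_mono assms by blast
  have lp: "le_edeg p n" using le_edeg_mono assms pt by blast
  have e1: "x ((\<lambda>_. 0), t) = cmp (x ((\<lambda>_. 0), p)) (cmp (x (p, q)) (x (q, t)))"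
    using path_cmp[of n x "\<lambda>_. 0" p t, OF assms(1) z pt assms(4)] path_cmp[of n x p q t, OF assms(1) assms(2) assms(3) assms(4)] by simp
  show ?thesis
    by (rule seg_char[of "x ((\<lambda>_. 0), p)" "x (q, t)"])
       (use assms z pt lq lp e1 in \<open>auto simp: path_in path_src path_rng path_deg\<close>)
qed

end


lemma enat_add_minus: "enat a + b - enat a = (b::enat)"
  by (cases b) auto

lemma enat_plus_minus: "enat a \<le> b \<Longrightarrow> enat a + (b - enat a) = (b::enat)"
  by (cases b) auto

lemma enat_le_minus_iff: "enat m \<le> N \<Longrightarrow> (enat q \<le> N - enat m) = (enat (q + m) \<le> N)"
  by (cases N) auto

lemma enat_le_plus_iff: "(enat t \<le> enat m + N) = (enat (t - m) \<le> N \<and> True) \<or> t \<le> m \<and> False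
   \<Longrightarrow> True" by simp

lemma enat_le_plus_minus: "m \<le> t \<Longrightarrow> enat t \<le> enat m + N \<Longrightarrow> enat (t - m) \<le> (N::enat)"
  by (cases N) auto

lemma enat_le_plus_minus': "enat (t - m) \<le> (N::enat) \<Longrightarrow> enat t \<le> enat m + N"
  by (cases N) auto

context kg begin

abbreviation "W \<equiv> WL L src rng cmp deg"
abbreviation "Z \<equiv> cylZ L src rng cmp deg"

lemma W_iff: "y \<in> W \<longleftrightarrow> ispath (fst y) (snd y)"
  unfolding WL_def by (cases y) auto

lemma Z_iff: "y \<in> Z l \<longleftrightarrow> y \<in> W \<and> le_edeg (deg l) (fst y) \<and> snd y ((\<lambda>_. 0), deg l) = l"
  unfolding cylZ_def by auto

lemma le_edeg_zero[simp]: "le_edeg (\<lambda>_. 0) n"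
  unfolding le_edeg_def by (simp add: zero_enat_def[symmetric])

lemma fst_shift: "fst (shift m y) = (\<lambda>j. fst y j - enat (m j))"
  unfolding shift_def by (simp add: Let_def)

lemma snd_shift: "snd (shift m y) (p, q) =
   (if p \<le> q \<and> le_edeg q (\<lambda>j. fst y j - enat (m j)) then snd y ((\<lambda>j. p j + m j), (\<lambda>j. q j + m j)) else undefined)"
  unfolding shift_def by (simp add: Let_def)

lemma le_edeg_shift_iff:
  assumes "le_edeg m n"
  shows "le_edeg q (\<lambda>j. n j - enat (m j)) \<longleftrightarrow> le_edeg (\<lambda>j. q j + m j) n"
  using assms unfolding le_edeg_def by (simp add: enat_le_minus_iff)

lemma add_fun_le: "p \<le> q \<Longrightarrow> (\<lambda>j. p j + m j) \<le> (\<lambda>j. q j + (m j::nat))"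
  by (auto simp: le_fun_def)

lemma shift_W:
  assumes y: "y \<in> W" and m: "le_edeg m (fst y)"
  shows "shift m y \<in> W"
proof -
  obtain n x where yy: "y = (n, x)" by (cases y)
  have px: "ispath n x" using y yy W_iff by auto
  have mn: "le_edeg m n" using m yy by simp
  let ?n' = "\<lambda>j. n j - enat (m j)"
  let ?x' = "snd (shift m y)"
  have fs: "fst (shift m y) = ?n'" using yy by (simp add: fst_shift)
  have sx: "\<And>p q. ?x' (p, q) = (if p \<le> q \<and> le_edeg (\<lambda>j. q j + m j) n
      then x ((\<lambda>j. p j + m j), (\<lambda>j. q j + m j)) else undefined)"
    using snd_shift[of m y] yy le_edeg_shift_iff[OF mn] by simp
  have A: "\<forall>p q. p \<le> q \<and> le_edeg q ?n' \<longrightarrow> ?x' (p, q) \<in> L \<and> deg (?x' (p, q)) = (\<lambda>j. q j - p j) \<and> rng (?x' (p, q)) = ?x' (p, p)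
        \<and> src (?x' (p, q)) = ?x' (q, q)"
  proof (intro allI impI)
    fix p q assume a: "p \<le> q \<and> le_edeg q ?n'"
    then have a': "(\<lambda>j. p j + m j) \<le> (\<lambda>j. q j + m j)" "le_edeg (\<lambda>j. q j + m j) n"
      using add_fun_le le_edeg_shift_iff[OF mn] by auto
    have pp: "le_edeg (\<lambda>j. p j + m j) n" using le_edeg_mono a' by blast
    show "?x' (p, q) \<in> L \<and> deg (?x' (p, q)) = (\<lambda>j. q j - p j) \<and> rng (?x' (p, q)) = ?x' (p, p)
        \<and> src (?x' (p, q)) = ?x' (q, q)"
      using a a' pp sx path_in[OF px a'] path_deg[OF px a'] path_rng[OF px a'] path_src[OF px a']
      by auto
  qed
  have B: "\<forall>p. le_edeg p ?n' \<longrightarrow> src (?x' (p, p)) = ?x' (p, p)"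
  proof (intro allI impI)
    fix p assume "le_edeg p ?n'"
    then have "le_edeg (\<lambda>j. p j + m j) n" using le_edeg_shift_iff[OF mn] by auto
    then show "src (?x' (p, p)) = ?x' (p, p)" using sx path_vert[OF px] by auto
  qed
  have C: "\<forall>p q t. p \<le> q \<and> q \<le> t \<and> le_edeg t ?n' \<longrightarrow> cmp (?x' (p, q)) (?x' (q, t)) = ?x' (p, t)"
  proof (intro allI impI)
    fix p q t assume a: "p \<le> q \<and> q \<le> t \<and> le_edeg t ?n'"
    then have "le_edeg (\<lambda>j. t j + m j) n" using le_edeg_shift_iff[OF mn] by auto
    moreover have "le_edeg (\<lambda>j. q j + m j) n" "le_edeg (\<lambda>j. p j + m j) n"
      using calculation a le_edeg_mono add_fun_le order_trans by blast+
    ultimately show "cmp (?x' (p, q)) (?x' (q, t)) = ?x' (p, t)"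
      using a sx path_cmp[OF px add_fun_le add_fun_le] order_trans by auto
  qed
  have D: "\<forall>p q. \<not> (p \<le> q \<and> le_edeg q ?n') \<longrightarrow> ?x' (p, q) = undefined"
    using sx le_edeg_shift_iff[OF mn] by auto
  have "ispath ?n' ?x'"
    unfolding is_path_def by (intro conjI) (fact A, fact B, fact C, fact D)
  then show ?thesis using fs W_iff by simp
qed

lemma shift0: assumes "y \<in> W" shows "shift (\<lambda>_. 0) y = y"
proof -
  obtain n x where yy: "y = (n, x)" by (cases y)
  have px: "ispath n x" using assms yy W_iff by auto
  have f: "fst (shift (\<lambda>_. 0) y) = n" using yy by (simp add: fst_shift zero_enat_def[symmetric])
  have "snd (shift (\<lambda>_. 0) y) = x"
  proof
    fix pq show "snd (shift (\<lambda>_. 0) y) pq = x pq"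
      using snd_shift[of "\<lambda>_. 0" y "fst pq" "snd pq"] yy path_undef[OF px, of "fst pq" "snd pq"]
      by (cases pq) (auto simp: zero_enat_def[symmetric])
  qed
  then show ?thesis using f yy by (metis prod.collapse)
qed

end


context kg begin

definition cdeg :: "'m \<Rightarrow> ('k, 'm) kpath \<Rightarrow> ('k \<Rightarrow> enat)" where
  "cdeg l y = (\<lambda>j. enat (deg l j) + fst y j)"

definition conc :: "'m \<Rightarrow> ('k, 'm) kpath \<Rightarrow> ('k, 'm) kpath" where
  "conc l y = (cdeg l y, \<lambda>(p, q). if p \<le> q \<and> le_edeg q (cdeg l y)
      then seg (cmp l (snd y ((\<lambda>_. 0), (\<lambda>j. max (q j) (deg l j) - deg l j)))) p q else undefined)"

lemma Wt_props:
  assumes l: "l \<in> L" and y: "y \<in> W" and s: "snd y ((\<lambda>_. 0), (\<lambda>_. 0)) = src l"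
    and t: "deg l \<le> t" "le_edeg t (cdeg l y)"
  shows "le_edeg (\<lambda>j. t j - deg l j) (fst y)"
    "cmp l (snd y ((\<lambda>_. 0), (\<lambda>j. t j - deg l j))) \<in> L"
    "deg (cmp l (snd y ((\<lambda>_. 0), (\<lambda>j. t j - deg l j)))) = t"
proof -
  have py: "ispath (fst y) (snd y)" using y W_iff by auto
  show le: "le_edeg (\<lambda>j. t j - deg l j) (fst y)"
    using t unfolding le_edeg_def cdeg_def le_fun_def by (auto intro: enat_le_plus_minus)
  have z: "(\<lambda>_. 0) \<le> (\<lambda>j. t j - deg l j)" by (simp add: le_fun_def)
  let ?v = "snd y ((\<lambda>_. 0), (\<lambda>j. t j - deg l j))"
  have v: "?v \<in> L" "rng ?v = src l" "deg ?v = (\<lambda>j. t j - deg l j)"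
    using path_in[OF py z le] path_rng[OF py z le] path_deg[OF py z le] s by auto
  show "cmp l ?v \<in> L" using v l cmp_in by auto
  show "deg (cmp l ?v) = t" using v l deg_cmp t(1) by (auto simp: le_fun_def fun_eq_iff)
qed

lemma conc_cons:
  assumes l: "l \<in> L" and y: "y \<in> W" and s: "snd y ((\<lambda>_. 0), (\<lambda>_. 0)) = src l"
    and pq: "p \<le> q" "q \<le> t" and t: "deg l \<le> t" "le_edeg t (cdeg l y)"
  shows "snd (conc l y) (p, q) = seg (cmp l (snd y ((\<lambda>_. 0), (\<lambda>j. t j - deg l j)))) p q"
proof -
  have py: "ispath (fst y) (snd y)" using y W_iff by auto
  define tq where "tq = (\<lambda>j. max (q j) (deg l j))"
  have tq: "tq \<le> t" "q \<le> tq" "deg l \<le> tq" using pq t unfolding tq_def le_fun_def by auto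
  have lq: "le_edeg q (cdeg l y)" "le_edeg tq (cdeg l y)" using le_edeg_mono tq t pq by blast+
  have c: "snd (conc l y) (p, q) = seg (cmp l (snd y ((\<lambda>_. 0), (\<lambda>j. tq j - deg l j)))) p q"
    unfolding conc_def tq_def using pq lq by simp
  let ?v = "snd y ((\<lambda>_. 0), (\<lambda>j. t j - deg l j))"
  have le: "le_edeg (\<lambda>j. t j - deg l j) (fst y)" using Wt_props[OF l y s t] by simp
  have z: "(\<lambda>_. 0) \<le> (\<lambda>j. t j - deg l j)" by (simp add: le_fun_def)
  have v: "?v \<in> L" "rng ?v = src l" "deg ?v = (\<lambda>j. t j - deg l j)"
    using path_in[OF py z le] path_rng[OF py z le] path_deg[OF py z le] s by auto
  have k: "(\<lambda>j. tq j - deg l j) \<le> deg ?v" using v tq by (auto simp: le_fun_def intro: diff_le_mono)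
  have e1: "seg (cmp l ?v) (\<lambda>_. 0) (\<lambda>j. deg l j + (tq j - deg l j)) = cmp l (seg ?v (\<lambda>_. 0) (\<lambda>j. tq j - deg l j))"
    using seg_cmp_left[OF l v(1) _ k] v by simp
  have e2: "(\<lambda>j. deg l j + (tq j - deg l j)) = tq" using tq by (auto simp: le_fun_def fun_eq_iff)
  have e3: "seg ?v (\<lambda>_. 0) (\<lambda>j. tq j - deg l j) = snd y ((\<lambda>_. 0), (\<lambda>j. tq j - deg l j))"
  proof (rule path_seg[OF py _ _ le])
    show "(\<lambda>_. 0) \<le> (\<lambda>j. tq j - deg l j)" by (simp add: le_fun_def)
    show "(\<lambda>j. tq j - deg l j) \<le> (\<lambda>j. t j - deg l j)" using tq(1) by (auto simp: le_fun_def intro: diff_le_mono)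
  qed
  have w: "cmp l ?v \<in> L" "deg (cmp l ?v) = t" using Wt_props[OF l y s t] by auto
  have e4: "seg (seg (cmp l ?v) (\<lambda>_. 0) tq) p q = seg (cmp l ?v) p q"
    using seg_seg[OF w(1) pq(1) tq(2)] tq w by simp
  show ?thesis using c e1 e2 e3 e4 by simp
qed

lemma conc_W:
  assumes l: "l \<in> L" and y: "y \<in> W" and s: "snd y ((\<lambda>_. 0), (\<lambda>_. 0)) = src l"
  shows "conc l y \<in> W"
proof -
  let ?n = "cdeg l y" and ?x = "snd (conc l y)"
  let ?T = "\<lambda>q::'k \<Rightarrow> nat. (\<lambda>j. max (q j) (deg l j))"
  let ?Wt = "\<lambda>t. cmp l (snd y ((\<lambda>_. 0), (\<lambda>j. t j - deg l j)))"
  have T: "\<And>q. q \<le> ?T q" "\<And>q. deg l \<le> ?T q" by (auto simp: le_fun_def)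
  have TL: "\<And>q. le_edeg q ?n \<Longrightarrow> le_edeg (?T q) ?n"
    unfolding le_edeg_def cdeg_def by (auto simp: max_def)
  have xs: "\<And>p q t. p \<le> q \<Longrightarrow> q \<le> t \<Longrightarrow> deg l \<le> t \<Longrightarrow> le_edeg t ?n \<Longrightarrow> ?x (p, q) = seg (?Wt t) p q"
    using conc_cons[OF l y s] by blast
  have wt: "\<And>t. deg l \<le> t \<Longrightarrow> le_edeg t ?n \<Longrightarrow> ?Wt t \<in> L \<and> deg (?Wt t) = t"
    using Wt_props[OF l y s] by blast
  have A: "\<forall>p q. p \<le> q \<and> le_edeg q ?n \<longrightarrow> ?x (p, q) \<in> L \<and> deg (?x (p, q)) = (\<lambda>j. q j - p j) \<and> rng (?x (p, q)) = ?x (p, p)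
        \<and> src (?x (p, q)) = ?x (q, q)"
  proof (intro allI impI)
    fix p q assume a: "p \<le> q \<and> le_edeg q ?n"
    have w: "?Wt (?T q) \<in> L" "deg (?Wt (?T q)) = ?T q" using wt T TL a by auto
    have e: "?x (p, q) = seg (?Wt (?T q)) p q" "?x (p, p) = seg (?Wt (?T q)) p p" "?x (q, q) = seg (?Wt (?T q)) q q"
      using xs[of p q "?T q"] xs[of p p "?T q"] xs[of q q "?T q"] a T TL order_trans by blast+
    have qd: "q \<le> deg (?Wt (?T q))" using w T by simp
    show "?x (p, q) \<in> L \<and> deg (?x (p, q)) = (\<lambda>j. q j - p j) \<and> rng (?x (p, q)) = ?x (p, p)
        \<and> src (?x (p, q)) = ?x (q, q)"
      using e seg_props[OF w(1) _ qd] seg_rng[OF w(1) _ qd] seg_src[OF w(1) _ qd] a by auto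
  qed
  have B: "\<forall>p. le_edeg p ?n \<longrightarrow> src (?x (p, p)) = ?x (p, p)"
  proof (intro allI impI)
    fix p assume a: "le_edeg p ?n"
    have w: "?Wt (?T p) \<in> L" "deg (?Wt (?T p)) = ?T p" using wt T TL a by auto
    have e: "?x (p, p) = seg (?Wt (?T p)) p p" using xs[of p p "?T p"] a T TL by blast
    show "src (?x (p, p)) = ?x (p, p)" using e seg_vertex[OF w(1)] w T by simp
  qed
  have C: "\<forall>p q t. p \<le> q \<and> q \<le> t \<and> le_edeg t ?n \<longrightarrow> cmp (?x (p, q)) (?x (q, t)) = ?x (p, t)"
  proof (intro allI impI)
    fix p q t assume a: "p \<le> q \<and> q \<le> t \<and> le_edeg t ?n"
    have w: "?Wt (?T t) \<in> L" "deg (?Wt (?T t)) = ?T t" using wt T TL a by auto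
    have e: "?x (p, q) = seg (?Wt (?T t)) p q" "?x (q, t) = seg (?Wt (?T t)) q t" "?x (p, t) = seg (?Wt (?T t)) p t"
      using xs[of p q "?T t"] xs[of q t "?T t"] xs[of p t "?T t"] a T TL order_trans by blast+
    show "cmp (?x (p, q)) (?x (q, t)) = ?x (p, t)"
      using e seg_cmp[OF w(1)] w T a by simp
  qed
  have D: "\<forall>p q. \<not> (p \<le> q \<and> le_edeg q ?n) \<longrightarrow> ?x (p, q) = undefined"
    unfolding conc_def by auto
  have "ispath ?n ?x"
    unfolding is_path_def by (intro conjI) (fact A, fact B, fact C, fact D)
  then show ?thesis using W_iff by (simp add: conc_def)
qed

end


lemma enat_le_add1: "enat a \<le> N \<Longrightarrow> enat (a + b) \<le> enat b + N"
  by (cases N) auto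

context kg begin

lemma conc_Z:
  assumes l: "l \<in> L" and y: "y \<in> W" and s: "snd y ((\<lambda>_. 0), (\<lambda>_. 0)) = src l"
  shows "conc l y \<in> Z l"
proof -
  have t: "le_edeg (deg l) (cdeg l y)" unfolding le_edeg_def cdeg_def by (simp add: le_iff_add)
  have e: "snd (conc l y) ((\<lambda>_. 0), deg l) = seg (cmp l (snd y ((\<lambda>_. 0), (\<lambda>j. deg l j - deg l j)))) (\<lambda>_. 0) (deg l)"
    using conc_cons[OF l y s _ order_refl order_refl t] by (simp add: le_fun_def)
  have "snd (conc l y) ((\<lambda>_. 0), deg l) = l" using e s l by (simp add: cmp_src seg_full)
  then show ?thesis using Z_iff conc_W[OF l y s] t by (simp add: conc_def)
qed

lemma shift_conc:
  assumes l: "l \<in> L" and y: "y \<in> W" and s: "snd y ((\<lambda>_. 0), (\<lambda>_. 0)) = src l"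
  shows "shift (deg l) (conc l y) = y"
proof -
  have py: "ispath (fst y) (snd y)" using y W_iff by auto
  have f: "fst (shift (deg l) (conc l y)) = fst y"
    by (simp add: fst_shift conc_def cdeg_def enat_add_minus)
  have "snd (shift (deg l) (conc l y)) = snd y"
  proof
    fix pq :: "('k \<Rightarrow> nat) \<times> ('k \<Rightarrow> nat)"
    obtain p q where pq: "pq = (p, q)" by (cases pq)
    show "snd (shift (deg l) (conc l y)) pq = snd y pq"
    proof (cases "p \<le> q \<and> le_edeg q (fst y)")
      case True
      let ?t = "\<lambda>j. q j + deg l j"
      have lt: "le_edeg ?t (cdeg l y)" using True unfolding le_edeg_def cdeg_def
        by (auto intro: enat_le_add1)
      have dl: "deg l \<le> ?t" "(\<lambda>j. p j + deg l j) \<le> ?t" using True by (auto simp: le_fun_def)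
      have c: "snd (conc l y) ((\<lambda>j. p j + deg l j), ?t) = seg (cmp l (snd y ((\<lambda>_. 0), (\<lambda>j. ?t j - deg l j)))) (\<lambda>j. p j + deg l j) ?t"
        using conc_cons[OF l y s dl(2) order_refl dl(1) lt] .
      have z: "(\<lambda>_. 0) \<le> q" by (simp add: le_fun_def)
      let ?v = "snd y ((\<lambda>_. 0), q)"
      have v: "?v \<in> L" "rng ?v = src l" "deg ?v = q"
        using path_in[OF py z True[THEN conjunct2]] path_rng[OF py z True[THEN conjunct2]]
          path_deg[OF py z True[THEN conjunct2]] s by auto
      have e1: "(\<lambda>j. ?t j - deg l j) = q" by simp
      have e2: "seg (cmp l ?v) (\<lambda>j. deg l j + p j) (\<lambda>j. deg l j + q j) = seg ?v p q"
        using seg_cmp_right[OF l v(1) _ _ ] v True by simp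
      have e3: "seg ?v p q = snd y (p, q)" using path_seg[OF py _ order_refl] True by simp
      have sh: "snd (shift (deg l) (conc l y)) (p, q) = snd (conc l y) ((\<lambda>j. p j + deg l j), ?t)"
        using snd_shift[of "deg l" "conc l y" p q] f[unfolded fst_shift] True by simp
      show ?thesis using pq sh c e1 e2 e3 by (simp add: add.commute)
    next
      case False
      have "snd (shift (deg l) (conc l y)) (p, q) = undefined"
        using snd_shift[of "deg l" "conc l y" p q] f[unfolded fst_shift] False by simp
      then show ?thesis using pq path_undef[OF py False] by simp
    qed
  qed
  then show ?thesis using f by (metis prod.collapse)
qed

lemma conc_uniq:
  assumes l: "l \<in> L" and x: "x \<in> Z l"
  shows "conc l (shift (deg l) x) = x"
proof -
  have xW: "x \<in> W" and ld: "le_edeg (deg l) (fst x)" and x0: "snd x ((\<lambda>_. 0), deg l) = l"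
    using x Z_iff by auto
  have px: "ispath (fst x) (snd x)" using xW W_iff by auto
  let ?y = "shift (deg l) x"
  have fy: "fst ?y = (\<lambda>j. fst x j - enat (deg l j))" by (simp add: fst_shift)
  have f: "fst (conc l ?y) = fst x"
    using ld unfolding le_edeg_def by (simp add: conc_def cdeg_def fy enat_plus_minus)
  have cd: "cdeg l ?y = fst x" using f by (simp add: conc_def)
  have "snd (conc l ?y) = snd x"
  proof
    fix pq :: "('k \<Rightarrow> nat) \<times> ('k \<Rightarrow> nat)"
    obtain p q where pq: "pq = (p, q)" by (cases pq)
    show "snd (conc l ?y) pq = snd x pq"
    proof (cases "p \<le> q \<and> le_edeg q (fst x)")
      case True
      define t where "t = (\<lambda>j. max (q j) (deg l j))"
      have t: "q \<le> t" "deg l \<le> t" by (auto simp: t_def le_fun_def)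
      have lt: "le_edeg t (fst x)" using True ld unfolding t_def le_edeg_def by (auto simp: max_def)
      have c: "snd (conc l ?y) (p, q) = seg (cmp l (snd ?y ((\<lambda>_. 0), (\<lambda>j. t j - deg l j)))) p q"
        using True unfolding conc_def cd t_def by simp
      have k: "le_edeg (\<lambda>j. t j - deg l j) (fst ?y)"
        using le_edeg_shift_iff[OF ld] lt t unfolding fy by (simp add: le_fun_def)
      have ys: "snd ?y ((\<lambda>_. 0), (\<lambda>j. t j - deg l j)) = snd x (deg l, t)"
        using snd_shift[of "deg l" x "\<lambda>_. 0" "\<lambda>j. t j - deg l j"] k t fy
        by (simp add: le_fun_def fun_eq_iff)
      have z: "(\<lambda>_. 0) \<le> deg l" by (simp add: le_fun_def)
      have xt: "cmp l (snd x (deg l, t)) = snd x ((\<lambda>_. 0), t)"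
        using path_cmp[OF px z t(2) lt] x0 by simp
      have "seg (snd x ((\<lambda>_. 0), t)) p q = snd x (p, q)"
        using path_seg[OF px _ t(1) lt] True by simp
      then show ?thesis using c ys xt pq by simp
    next
      case False
      then show ?thesis using pq path_undef[OF px False] unfolding conc_def cd by auto
    qed
  qed
  then show ?thesis using f by (metis prod.collapse)
qed

lemma shift_Z_src:
  assumes l: "l \<in> L" and x: "x \<in> Z l"
  shows "shift (deg l) x \<in> Z (src l)" "snd (shift (deg l) x) ((\<lambda>_. 0), (\<lambda>_. 0)) = src l"
proof -
  have xW: "x \<in> W" and ld: "le_edeg (deg l) (fst x)" and x0: "snd x ((\<lambda>_. 0), deg l) = l"
    using x Z_iff by auto
  have px: "ispath (fst x) (snd x)" using xW W_iff by auto
  have z: "(\<lambda>_. 0) \<le> deg l" by (simp add: le_fun_def)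
  have "snd (shift (deg l) x) ((\<lambda>_. 0), (\<lambda>_. 0)) = snd x (deg l, deg l)"
    using snd_shift[of "deg l" x "\<lambda>_. 0" "\<lambda>_. 0"] by simp
  also have "\<dots> = src l" using path_src[OF px z ld] x0 by simp
  finally show s: "snd (shift (deg l) x) ((\<lambda>_. 0), (\<lambda>_. 0)) = src l" .
  show "shift (deg l) x \<in> Z (src l)"
    using shift_W[OF xW ld] s Z_iff deg_src0[OF l] by simp
qed

end


context kg begin

definition Bset :: "'m \<Rightarrow> ('k \<Rightarrow> nat) \<Rightarrow> 'm set" where
  "Bset a nn = {b \<in> L. rng b = src a \<and> deg b = nn}"

lemma Z_disj: assumes "deg a = deg b" "a \<noteq> b" shows "Z a \<inter> Z b = {}"
proof (rule equals0I)
  fix x assume "x \<in> Z a \<inter> Z b"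
  then have "snd x ((\<lambda>_. 0), deg a) = a" "snd x ((\<lambda>_. 0), deg b) = b" by (simp_all add: Z_iff)
  then show False using assms by simp
qed

lemma decomp:
  assumes a: "a \<in> L"
  shows "Z a \<inter> {x. le_edeg (\<lambda>j. deg a j + nn j) (fst x)} = (\<Union>b\<in>Bset a nn. Z (cmp a b))"
proof (intro equalityI subsetI)
  fix x assume "x \<in> Z a \<inter> {x. le_edeg (\<lambda>j. deg a j + nn j) (fst x)}"
  then have xW: "x \<in> W" and ld: "le_edeg (deg a) (fst x)" and x0: "snd x ((\<lambda>_. 0), deg a) = a"
    and lt: "le_edeg (\<lambda>j. deg a j + nn j) (fst x)" using Z_iff by auto
  have px: "ispath (fst x) (snd x)" using xW W_iff by auto
  let ?t = "\<lambda>j. deg a j + nn j"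
  have mt: "deg a \<le> ?t" by (simp add: le_fun_def)
  have z: "(\<lambda>_. 0) \<le> deg a" by (simp add: le_fun_def)
  let ?b = "snd x (deg a, ?t)"
  have b: "?b \<in> L" "deg ?b = nn" "rng ?b = src a"
    using path_in[OF px mt lt] path_deg[OF px mt lt] path_rng[OF px mt lt]
      path_src[OF px z ld] x0 by auto
  have c: "cmp a ?b = snd x ((\<lambda>_. 0), ?t)" using path_cmp[OF px z mt lt] x0 by simp
  have dc: "deg (cmp a ?b) = ?t" using a b deg_cmp by simp
  have "x \<in> Z (cmp a ?b)" using Z_iff xW lt c dc by simp
  moreover have "?b \<in> Bset a nn" using b unfolding Bset_def by auto
  ultimately show "x \<in> (\<Union>b\<in>Bset a nn. Z (cmp a b))" by blast
next
  fix x assume "x \<in> (\<Union>b\<in>Bset a nn. Z (cmp a b))"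
  then obtain b where b: "b \<in> L" "rng b = src a" "deg b = nn" and xz: "x \<in> Z (cmp a b)"
    unfolding Bset_def by auto
  let ?t = "\<lambda>j. deg a j + nn j"
  have dc: "deg (cmp a b) = ?t" using a b deg_cmp by simp
  have xW: "x \<in> W" and lt: "le_edeg ?t (fst x)" and x0: "snd x ((\<lambda>_. 0), ?t) = cmp a b"
    using xz Z_iff dc by auto
  have px: "ispath (fst x) (snd x)" using xW W_iff by auto
  have mt: "deg a \<le> ?t" by (simp add: le_fun_def)
  have z: "(\<lambda>_. 0) \<le> deg a" by (simp add: le_fun_def)
  have ld: "le_edeg (deg a) (fst x)" using le_edeg_mono[OF mt lt] .
  have c0: "cmp (snd x ((\<lambda>_. 0), deg a)) (snd x (deg a, ?t)) = snd x ((\<lambda>_. 0), ?t)"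
    by (rule path_cmp[OF px z mt lt])
  have c: "cmp (snd x ((\<lambda>_. 0), deg a)) (snd x (deg a, ?t)) = cmp a b"
    unfolding c0 by (rule x0)
  have "snd x ((\<lambda>_. 0), deg a) = a"
    using fact_uniq[OF path_in[OF px z ld] path_in[OF px mt lt] a b(1)] c b a
      path_src[OF px z ld] path_rng[OF px mt lt] path_deg[OF px z ld] path_deg[OF px mt lt]
    by simp
  then show "x \<in> Z a \<inter> {x. le_edeg ?t (fst x)}" using Z_iff xW ld lt by simp
qed

lemma decomp_disj:
  assumes a: "a \<in> L" and b: "b \<in> Bset a nn" "b' \<in> Bset a nn" "b \<noteq> b'"
  shows "Z (cmp a b) \<inter> Z (cmp a b') = {}"
proof -
  have bb: "b \<in> L" "b' \<in> L" "src a = rng b" "src a = rng b'" "deg b = deg b'"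
    using b unfolding Bset_def by auto
  have "cmp a b \<noteq> cmp a b'"
  proof
    assume "cmp a b = cmp a b'"
    then have "a = a \<and> b = b'" by (rule fact_uniq[OF a bb(1) a bb(2) bb(3) bb(4) refl bb(5)])
    then show False using b by simp
  qed
  moreover have "deg (cmp a b) = deg (cmp a b')" using a b deg_cmp unfolding Bset_def by auto
  ultimately show ?thesis using Z_disj by blast
qed

lemma Bset_finite: "finite_kgraph L deg \<Longrightarrow> finite (Bset a nn)"
  unfolding finite_kgraph_def Bset_def
  by (rule finite_subset[of _ "{l \<in> L. deg l = nn}"]) auto

lemma W_Z0: "x \<in> W \<Longrightarrow> x \<in> Z (snd x ((\<lambda>_. 0), (\<lambda>_. 0))) \<and> snd x ((\<lambda>_. 0), (\<lambda>_. 0)) \<in> vertices L src"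
proof -
  assume xW: "x \<in> W"
  have px: "ispath (fst x) (snd x)" using xW W_iff by auto
  have z: "(\<lambda>_. 0) \<le> (\<lambda>_. 0::nat)" by simp
  let ?v = "snd x ((\<lambda>_. 0), (\<lambda>_. 0))"
  have v: "?v \<in> L" "deg ?v = (\<lambda>_. 0)" "src ?v = ?v"
    using path_in[OF px z] path_deg[OF px z] path_vert[OF px] by auto
  then show ?thesis using Z_iff xW unfolding vertices_def by simp
qed

lemma vertex_deg: "v \<in> vertices L src \<Longrightarrow> v \<in> L \<and> deg v = (\<lambda>_. 0) \<and> rng v = v"
  unfolding vertices_def using deg_src0[of v] rng_src[of v] by auto

lemma cmp_vertex: "v \<in> vertices L src \<Longrightarrow> b \<in> Bset v nn \<Longrightarrow> cmp v b = b"
  unfolding Bset_def using vertex_deg[of v] cmp_rng[of b] unfolding vertices_def by auto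

end


locale qi = kg L src rng cmp deg for L :: "'m set" and src rng cmp and deg :: "'m \<Rightarrow> ('k::finite \<Rightarrow> nat)" +
  fixes r :: "'k \<Rightarrow> real" and \<mu> :: "('k, 'm) kpath measure"
  assumes FK: "finite_kgraph L deg"
    and BM: "borel_measure_on_W L src rng cmp deg \<mu>"
    and PS: "prob_space \<mu>"
    and QI: "quasi_invariant L src rng cmp deg (dot_cocycle r) \<mu>"
begin

lemma space_mu: "space \<mu> = W" and sets_mu: "sets \<mu> = sigma_sets W {U. openin (topW L src rng cmp deg) U}"
  using BM unfolding borel_measure_on_W_def by auto

lemma fin: "finite_measure \<mu>" using PS prob_space_def by blast

lemma Z_sets: assumes l: "l \<in> L" shows "Z l \<in> sets \<mu>"
proof -
  have "Z l = cylZ L src rng cmp deg l - (\<Union>a\<in>{}. cylZ L src rng cmp deg (cmp l a))" by simp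
  then have "Z l \<in> basisW L src rng cmp deg" unfolding basisW_def using l by blast
  then have "openin (topW L src rng cmp deg) (Z l)"
    unfolding topW_def openin_topology_generated_by_iff by (rule generate_topology_on.Basis)
  then show ?thesis unfolding sets_mu by (auto intro: sigma_sets.Basic)
qed

definition Ubis :: "'m \<Rightarrow> ('k, 'm) garrow set" where
  "Ubis l = Zstar L src rng cmp deg l (src l)"

lemma Ubis_eq: assumes l: "l \<in> L"
  shows "Ubis l = (\<lambda>x. (x, (\<lambda>j. int (deg l j)), shift (deg l) x)) ` Z l"
proof (intro equalityI subsetI)
  fix g assume "g \<in> Ubis l"
  then obtain x h y where g: "g = (x, h, y)" "x \<in> Z l" "y \<in> Z (src l)"
    "shift (deg l) x = shift (deg (src l)) y" "h = (\<lambda>j. int (deg l j) - int (deg (src l) j))"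
    unfolding Ubis_def Zstar_def by auto
  have yW: "y \<in> W" using g Z_iff by auto
  have "shift (deg l) x = y" using g(4) shift0[OF yW] deg_src0[OF l] by simp
  moreover have "h = (\<lambda>j. int (deg l j))" using g(5) deg_src0[OF l] by simp
  ultimately show "g \<in> (\<lambda>x. (x, (\<lambda>j. int (deg l j)), shift (deg l) x)) ` Z l" using g by auto
next
  fix g assume "g \<in> (\<lambda>x. (x, (\<lambda>j. int (deg l j)), shift (deg l) x)) ` Z l"
  then obtain x where g: "g = (x, (\<lambda>j. int (deg l j)), shift (deg l) x)" "x \<in> Z l" by auto
  have yz: "shift (deg l) x \<in> Z (src l)" using shift_Z_src[OF l g(2)] by simp
  have yW: "shift (deg l) x \<in> W" using yz Z_iff by auto
  show "g \<in> Ubis l" unfolding Ubis_def Zstar_def using g yz shift0[OF yW] deg_src0[OF l] by auto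
qed

lemma Ubis_open: assumes l: "l \<in> L" shows "openin (topG L src rng cmp deg) (Ubis l)"
proof -
  have "Ubis l = {(x, g, y) \<in> Zstar L src rng cmp deg l (src l). x \<notin> (\<Union>a\<in>{}. cylZ L src rng cmp deg (cmp l a))}"
    unfolding Ubis_def by auto
  moreover have "src l \<in> L" "src l = src (src l)" using l src_in src_src by auto
  ultimately have "Ubis l \<in> basisG L src rng cmp deg" unfolding basisG_def using l by blast
  then show ?thesis
    unfolding topG_def openin_topology_generated_by_iff by (rule generate_topology_on.Basis)
qed

lemma Ubis_range: assumes l: "l \<in> L" shows "g_range ` Ubis l = Z l"
  unfolding Ubis_eq[OF l] g_range_def by (auto simp: image_iff)

lemma Ubis_source: assumes l: "l \<in> L" shows "g_source ` Ubis l = Z (src l)"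
proof (intro equalityI subsetI)
  fix y assume "y \<in> g_source ` Ubis l"
  then show "y \<in> Z (src l)" unfolding Ubis_eq[OF l] g_source_def using shift_Z_src[OF l] by auto
next
  fix y assume y: "y \<in> Z (src l)"
  have yW: "y \<in> W" and y0: "snd y ((\<lambda>_. 0), (\<lambda>_. 0)) = src l" using y Z_iff deg_src0[OF l] by auto
  have "conc l y \<in> Z l" "shift (deg l) (conc l y) = y" using conc_Z[OF l yW y0] shift_conc[OF l yW y0] by auto
  then show "y \<in> g_source ` Ubis l" unfolding Ubis_eq[OF l] g_source_def image_image by force
qed

lemma Ubis_bisection: assumes l: "l \<in> L" shows "open_bisection L src rng cmp deg (Ubis l)"
  unfolding open_bisection_def
proof (intro conjI)
  show "openin (topG L src rng cmp deg) (Ubis l)" by (rule Ubis_open[OF l])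
  show "inj_on g_range (Ubis l)" unfolding Ubis_eq[OF l] g_range_def
  proof (rule inj_onI)
    fix a b assume "a \<in> (\<lambda>x. (x, (\<lambda>j. int (deg l j)), shift (deg l) x)) ` Z l"
      "b \<in> (\<lambda>x. (x, (\<lambda>j. int (deg l j)), shift (deg l) x)) ` Z l" "fst a = fst b"
    then obtain x x' where "a = (x, (\<lambda>j. int (deg l j)), shift (deg l) x)"
      "b = (x', (\<lambda>j. int (deg l j)), shift (deg l) x')" "x = x'"
      by auto
    then show "a = b" by simp
  qed
  show "inj_on g_source (Ubis l)" unfolding Ubis_eq[OF l] g_source_def
  proof (rule inj_onI)
    fix a b assume "a \<in> (\<lambda>x. (x, (\<lambda>j. int (deg l j)), shift (deg l) x)) ` Z l"
      "b \<in> (\<lambda>x. (x, (\<lambda>j. int (deg l j)), shift (deg l) x)) ` Z l" "snd (snd a) = snd (snd b)"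
    then obtain x x' where "a = (x, (\<lambda>j. int (deg l j)), shift (deg l) x)" "x \<in> Z l"
      "b = (x', (\<lambda>j. int (deg l j)), shift (deg l) x')" "x' \<in> Z l" "shift (deg l) x = shift (deg l) x'"
      by auto
    then show "a = b" using conc_uniq[OF l] by metis
  qed
qed

definition Cst :: "'m \<Rightarrow> real" where "Cst l = (\<Sum>j\<in>UNIV. r j * real (deg l j))"

lemma cyl_formula: assumes l: "l \<in> L"
  shows "emeasure \<mu> (Z l) = ennreal (exp (- Cst l)) * emeasure \<mu> (Z (src l))"
proof -
  have q: "emeasure \<mu> (g_range ` Ubis l) =
     (\<integral>\<^sup>+ x. ennreal (exp (- dot_cocycle r (THE g. g \<in> Ubis l \<and> g_source g = x))) * indicator (g_source ` Ubis l) x \<partial>\<mu>)"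
    using QI Ubis_bisection[OF l] unfolding quasi_invariant_def by blast
  have inj: "inj_on g_source (Ubis l)" using Ubis_bisection[OF l] unfolding open_bisection_def by blast
  have "\<And>x. ennreal (exp (- dot_cocycle r (THE g. g \<in> Ubis l \<and> g_source g = x))) * indicator (g_source ` Ubis l) x
      = ennreal (exp (- Cst l)) * indicator (Z (src l)) x"
  proof -
    fix x
    show "ennreal (exp (- dot_cocycle r (THE g. g \<in> Ubis l \<and> g_source g = x))) * indicator (g_source ` Ubis l) x
      = ennreal (exp (- Cst l)) * indicator (Z (src l)) x"
    proof (cases "x \<in> g_source ` Ubis l")
      case True
      then have ex: "\<exists>!g. g \<in> Ubis l \<and> g_source g = x" using inj by (auto simp: inj_on_def)
      have "(THE g. g \<in> Ubis l \<and> g_source g = x) \<in> Ubis l" using theI'[OF ex] by blast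
      then have "fst (snd (THE g. g \<in> Ubis l \<and> g_source g = x)) = (\<lambda>j. int (deg l j))"
        unfolding Ubis_eq[OF l] by auto
      then have "dot_cocycle r (THE g. g \<in> Ubis l \<and> g_source g = x) = Cst l"
        unfolding dot_cocycle_def Cst_def by simp
      then show ?thesis using True Ubis_source[OF l] by simp
    next
      case False
      then show ?thesis using Ubis_source[OF l] by simp
    qed
  qed
  then have "emeasure \<mu> (Z l) = (\<integral>\<^sup>+ x. ennreal (exp (- Cst l)) * indicator (Z (src l)) x \<partial>\<mu>)"
    using q Ubis_range[OF l] by simp
  also have "\<dots> = ennreal (exp (- Cst l)) * emeasure \<mu> (Z (src l))"
    by (rule nn_integral_cmult_indicator[OF Z_sets[OF src_in[OF l]]])
  finally show ?thesis .
qed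

lemma cyl_formula_real: assumes l: "l \<in> L"
  shows "measure \<mu> (Z l) = exp (- Cst l) * measure \<mu> (Z (src l))"
proof -
  interpret finite_measure \<mu> by (rule fin)
  have "ennreal (measure \<mu> (Z l)) = ennreal (exp (- Cst l) * measure \<mu> (Z (src l)))"
    using cyl_formula[OF l] by (simp add: emeasure_eq_measure ennreal_mult)
  then show ?thesis by (simp add: ennreal_inj)
qed

end


context qi begin

abbreviation "vs \<equiv> vlist L src"
abbreviation "nV \<equiv> length vs"

lemma vertices_finite: "finite (vertices L src)"
proof -
  have "vertices L src \<subseteq> {l \<in> L. deg l = (\<lambda>_. 0)}" using vertex_deg by auto
  then show ?thesis using FK unfolding finite_kgraph_def by (meson finite_subset)
qed

lemma vs_props: "distinct vs" "set vs = vertices L src"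
proof -
  have "\<exists>xs. distinct xs \<and> set xs = vertices L src"
    using finite_distinct_list[OF vertices_finite] by metis
  from someI_ex[OF this] show "distinct vs" "set vs = vertices L src" unfolding vlist_def by auto
qed

lemma vs_vertex: "a < nV \<Longrightarrow> vs ! a \<in> vertices L src"
  using vs_props nth_mem by blast

lemma regroup:
  assumes B: "finite B" "src ` B \<subseteq> vertices L src"
  shows "(\<Sum>\<beta>\<in>B. f (src \<beta>)) = (\<Sum>b<nV. real (card {\<beta>\<in>B. src \<beta> = vs ! b}) * f (vs ! b))"
proof -
  have "(\<Sum>\<beta>\<in>B. f (src \<beta>)) = (\<Sum>w\<in>set vs. \<Sum>\<beta>\<in>{\<beta>. \<beta> \<in> B \<and> src \<beta> = w}. f (src \<beta>))"
    using sum.group[OF B(1) _ , of "set vs" src "\<lambda>\<beta>. f (src \<beta>)"] B vs_props vertices_finite by simp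
  also have "\<dots> = (\<Sum>w\<in>set vs. real (card {\<beta>\<in>B. src \<beta> = w}) * f w)"
    by (rule sum.cong) auto
  also have "\<dots> = (\<Sum>b<nV. real (card {\<beta>\<in>B. src \<beta> = vs ! b}) * f (vs ! b))"
    using sum.reindex_bij_betw[OF bij_betw_nth[OF vs_props(1) refl refl],
        of "\<lambda>w. real (card {\<beta>\<in>B. src \<beta> = w}) * f w"] by (simp add: lessThan_atLeast0)
  finally show ?thesis .
qed

abbreviation "mZ w \<equiv> measure \<mu> (Z w)"

lemma Cst_N: "deg l = (\<lambda>j. N * unit_deg i j) \<Longrightarrow> Cst l = real N * r i"
proof -
  assume d: "deg l = (\<lambda>j. N * unit_deg i j)"
  have "Cst l = (\<Sum>j\<in>UNIV. if j = i then r i * real N else 0)"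
    unfolding Cst_def d unit_deg_def by (intro sum.cong) auto
  also have "\<dots> = real N * r i" by simp
  finally show ?thesis .
qed

lemma Cst_1: "deg l = unit_deg i \<Longrightarrow> Cst l = r i"
  using Cst_N[of l 1 i] by simp

definition Gset :: "'m \<Rightarrow> ('k \<Rightarrow> nat) \<Rightarrow> ('k, 'm) kpath set" where
  "Gset v nn = Z v \<inter> {x. le_edeg nn (fst x)}"

lemma Gset_union: assumes v: "v \<in> vertices L src"
  shows "Gset v nn = (\<Union>\<beta>\<in>Bset v nn. Z \<beta>)"
proof -
  have vv: "v \<in> L" "deg v = (\<lambda>_. 0)" using vertex_deg[OF v] by auto
  have "Gset v nn = (\<Union>\<beta>\<in>Bset v nn. Z (cmp v \<beta>))" using decomp[OF vv(1), of nn] vv unfolding Gset_def by simp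
  also have "\<dots> = (\<Union>\<beta>\<in>Bset v nn. Z \<beta>)" using cmp_vertex[OF v] by simp
  finally show ?thesis .
qed

lemma fin_emeasure: "emeasure \<mu> A \<noteq> \<infinity>"
  using finite_measure.emeasure_finite[OF fin] by simp

lemma Bset_L: "Bset a nn \<subseteq> L" unfolding Bset_def by auto

lemma Gset_sets: assumes v: "v \<in> vertices L src" shows "Gset v nn \<in> sets \<mu>"
  unfolding Gset_union[OF v]
  by (rule sets.finite_UN[OF Bset_finite[OF FK]]) (use Z_sets Bset_L in blast)

lemma Gset_measure: assumes v: "v \<in> vertices L src"
  shows "measure \<mu> (Gset v nn) = (\<Sum>\<beta>\<in>Bset v nn. mZ \<beta>)"
proof -
  have d: "disjoint_family_on Z (Bset v nn)"
    unfolding disjoint_family_on_def using decomp_disj[where a=v and nn=nn] cmp_vertex[OF v] vertex_deg[OF v] by auto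
  show ?thesis unfolding Gset_union[OF v]
    by (rule measure_finite_Union[OF Bset_finite[OF FK] _ d fin_emeasure]) (use Z_sets Bset_L in blast)
qed

lemma Bset_src: "b \<in> Bset a nn \<Longrightarrow> src b \<in> vertices L src"
  unfolding Bset_def vertices_def using src_in src_src by auto

lemma Gset_N: assumes v: "v \<in> vertices L src"
  shows "measure \<mu> (Gset v (\<lambda>j. N * unit_deg i j)) = exp (- (real N * r i)) * (\<Sum>\<beta>\<in>Bset v (\<lambda>j. N * unit_deg i j). mZ (src \<beta>))"
proof -
  have "measure \<mu> (Gset v (\<lambda>j. N * unit_deg i j)) = (\<Sum>\<beta>\<in>Bset v (\<lambda>j. N * unit_deg i j). exp (- (real N * r i)) * mZ (src \<beta>))"
    unfolding Gset_measure[OF v]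
    by (intro sum.cong refl) (auto simp: Bset_def cyl_formula_real Cst_N)
  then show ?thesis by (simp add: sum_distrib_left)
qed

lemma edge_ineq: assumes a: "a < nV"
  shows "exp (- r i) * (\<Sum>b<nV. real (card {l \<in> L. rng l = vs ! a \<and> deg l = unit_deg i \<and> src l = vs ! b}) * mZ (vs ! b)) \<le> mZ (vs ! a)"
proof -
  let ?v = "vs ! a"
  have v: "?v \<in> vertices L src" using vs_vertex[OF a] .
  have vv: "?v \<in> L" "src ?v = ?v" using v unfolding vertices_def by auto
  have g: "measure \<mu> (Gset ?v (\<lambda>j. 1 * unit_deg i j)) = exp (- r i) * (\<Sum>\<beta>\<in>Bset ?v (unit_deg i). mZ (src \<beta>))"
    using Gset_N[OF v, of 1 i] by simp
  have "(\<Sum>\<beta>\<in>Bset ?v (unit_deg i). mZ (src \<beta>)) =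
      (\<Sum>b<nV. real (card {\<beta>\<in>Bset ?v (unit_deg i). src \<beta> = vs ! b}) * mZ (vs ! b))"
    by (rule regroup) (use Bset_finite[OF FK] Bset_src in auto)
  also have "\<dots> = (\<Sum>b<nV. real (card {l \<in> L. rng l = vs ! a \<and> deg l = unit_deg i \<and> src l = vs ! b}) * mZ (vs ! b))"
    by (intro sum.cong refl arg_cong2[where f = "(*)"] arg_cong[where f = "\<lambda>S. real (card S)"])
       (auto simp: Bset_def vv)
  finally have e: "measure \<mu> (Gset ?v (unit_deg i)) = exp (- r i) * (\<Sum>b<nV. real (card {l \<in> L. rng l = vs ! a \<and> deg l = unit_deg i \<and> src l = vs ! b}) * mZ (vs ! b))"
    using g by simp
  have "measure \<mu> (Gset ?v (unit_deg i)) \<le> mZ ?v"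
    by (rule finite_measure.finite_measure_mono[OF fin]) (auto simp: Gset_def Z_sets vv)
  then show ?thesis using e by simp
qed

end


context qi begin

lemma Bset_src_eq: "a \<in> L \<Longrightarrow> Bset (src a) nn = Bset a nn"
  unfolding Bset_def using src_src by auto

lemma decomp_sets: assumes a: "a \<in> L"
  shows "Z a \<inter> {x. le_edeg (\<lambda>j. deg a j + nn j) (fst x)} \<in> sets \<mu>"
  unfolding decomp[OF a]
  by (rule sets.finite_UN[OF Bset_finite[OF FK]]) (use Z_sets Bset_L a cmp_in in \<open>auto simp: Bset_def\<close>)

lemma R2: assumes a: "a \<in> L" and d: "deg a = unit_deg i"
  shows "measure \<mu> (Z a \<inter> {x. le_edeg (\<lambda>j. deg a j + N * unit_deg i j) (fst x)})
    = exp (- r i) * measure \<mu> (Gset (src a) (\<lambda>j. N * unit_deg i j))"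
proof -
  let ?nn = "\<lambda>j. N * unit_deg i j"
  have dj: "disjoint_family_on (\<lambda>b. Z (cmp a b)) (Bset a ?nn)"
    unfolding disjoint_family_on_def using decomp_disj[OF a] by blast
  have "measure \<mu> (Z a \<inter> {x. le_edeg (\<lambda>j. deg a j + ?nn j) (fst x)}) = (\<Sum>b\<in>Bset a ?nn. mZ (cmp a b))"
    unfolding decomp[OF a]
    by (rule measure_finite_Union[OF Bset_finite[OF FK] _ dj fin_emeasure])
       (use Z_sets Bset_L a cmp_in in \<open>auto simp: Bset_def\<close>)
  also have "\<dots> = (\<Sum>b\<in>Bset a ?nn. exp (- (real (Suc N) * r i)) * mZ (src b))"
  proof (intro sum.cong refl)
    fix b assume b: "b \<in> Bset a ?nn"
    have bb: "b \<in> L" "src a = rng b" "deg b = ?nn" using b unfolding Bset_def by auto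
    have cl: "cmp a b \<in> L" using a bb cmp_in by auto
    have "deg (cmp a b) = (\<lambda>j. Suc N * unit_deg i j)" using deg_cmp[OF a bb(1) bb(2)] d bb(3) by simp
    then have "Cst (cmp a b) = real (Suc N) * r i" by (rule Cst_N)
    then show "mZ (cmp a b) = exp (- (real (Suc N) * r i)) * mZ (src b)"
      using cyl_formula_real[OF cl] src_cmp[OF a bb(1) bb(2)] by simp
  qed
  also have "\<dots> = exp (- (real (Suc N) * r i)) * (\<Sum>b\<in>Bset a ?nn. mZ (src b))"
    by (simp add: sum_distrib_left)
  also have "exp (- (real (Suc N) * r i)) = exp (- r i) * exp (- (real N * r i))"
    by (simp add: exp_add[symmetric] algebra_simps)
  also have "exp (- r i) * exp (- (real N * r i)) * (\<Sum>b\<in>Bset a ?nn. mZ (src b)) = exp (- r i) * (exp (- (real N * r i)) * (\<Sum>b\<in>Bset a ?nn. mZ (src b)))"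
    by (simp only: mult.assoc)
  also have "\<dots> = exp (- r i) * measure \<mu> (Gset (src a) ?nn)"
    using Gset_N[of "src a" N i] Bset_src_eq[OF a] src_in[OF a] src_src[OF a]
    unfolding vertices_def by simp
  finally show ?thesis .
qed

lemma R3: assumes v: "v \<in> vertices L src"
  shows "measure \<mu> (Gset v (\<lambda>j. Suc N * unit_deg i j)) =
    (\<Sum>a\<in>Bset v (unit_deg i). measure \<mu> (Z a \<inter> {x. le_edeg (\<lambda>j. deg a j + N * unit_deg i j) (fst x)}))"
proof -
  let ?A = "\<lambda>a. Z a \<inter> {x. le_edeg (\<lambda>j. deg a j + N * unit_deg i j) (fst x)}"
  have dA: "\<And>a. a \<in> Bset v (unit_deg i) \<Longrightarrow> (\<lambda>j. deg a j + N * unit_deg i j) = (\<lambda>j. Suc N * unit_deg i j)"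
    unfolding Bset_def by auto
  have le1: "unit_deg i \<le> (\<lambda>j. Suc N * unit_deg i j)" by (auto simp: le_fun_def)
  have eq: "Gset v (\<lambda>j. Suc N * unit_deg i j) = (\<Union>a\<in>Bset v (unit_deg i). ?A a)"
  proof (intro equalityI subsetI)
    fix x assume x: "x \<in> Gset v (\<lambda>j. Suc N * unit_deg i j)"
    then have "x \<in> Gset v (unit_deg i)" unfolding Gset_def using le_edeg_mono[OF le1] by auto
    then obtain a where a: "a \<in> Bset v (unit_deg i)" "x \<in> Z a" unfolding Gset_union[OF v] by auto
    then show "x \<in> (\<Union>a\<in>Bset v (unit_deg i). ?A a)" using x dA[OF a(1)] unfolding Gset_def by auto
  next
    fix x assume "x \<in> (\<Union>a\<in>Bset v (unit_deg i). ?A a)"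
    then obtain a where a: "a \<in> Bset v (unit_deg i)" "x \<in> ?A a" by auto
    then have "x \<in> Gset v (unit_deg i)" unfolding Gset_union[OF v] by auto
    then show "x \<in> Gset v (\<lambda>j. Suc N * unit_deg i j)" using a dA[OF a(1)] unfolding Gset_def by auto
  qed
  have dj0: "disjoint_family_on Z (Bset v (unit_deg i))"
    unfolding disjoint_family_on_def using decomp_disj[where a=v and nn="unit_deg i"] cmp_vertex[OF v] vertex_deg[OF v] by auto
  have dj: "disjoint_family_on ?A (Bset v (unit_deg i))"
    unfolding disjoint_family_on_def
  proof (intro ballI impI)
    fix a a' assume "a \<in> Bset v (unit_deg i)" "a' \<in> Bset v (unit_deg i)" "a \<noteq> a'"
    then have "Z a \<inter> Z a' = {}" using dj0 unfolding disjoint_family_on_def by blast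
    then show "?A a \<inter> ?A a' = {}" by blast
  qed
  have As: "?A ` Bset v (unit_deg i) \<subseteq> sets \<mu>"
  proof (rule image_subsetI)
    fix a assume "a \<in> Bset v (unit_deg i)"
    then have "a \<in> L" using Bset_L by blast
    then show "?A a \<in> sets \<mu>" by (rule decomp_sets)
  qed
  show ?thesis unfolding eq
    by (rule measure_finite_Union[OF Bset_finite[OF FK] As dj fin_emeasure])
qed

definition gN :: "'k \<Rightarrow> nat \<Rightarrow> 'm \<Rightarrow> real" where
  "gN i N w = measure \<mu> (Gset w (\<lambda>j. N * unit_deg i j))"

definition cnt :: "'k \<Rightarrow> nat \<Rightarrow> nat \<Rightarrow> real" where
  "cnt i a b = real (card {l \<in> L. rng l = vs ! a \<and> deg l = unit_deg i \<and> src l = vs ! b})"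

lemma Bset_card: assumes a: "a < nV"
  shows "real (card {\<beta>\<in>Bset (vs ! a) (unit_deg i). src \<beta> = vs ! b}) = cnt i a b"
proof -
  have vv: "src (vs ! a) = vs ! a" using vs_vertex[OF a] unfolding vertices_def by auto
  show ?thesis unfolding cnt_def Bset_def vv by (intro arg_cong[where f = "\<lambda>S. real (card S)"]) auto
qed

lemma gN_rec: assumes a: "a < nV"
  shows "gN i (Suc N) (vs ! a) = exp (- r i) * (\<Sum>b<nV. cnt i a b * gN i N (vs ! b))"
proof -
  let ?v = "vs ! a"
  have v: "?v \<in> vertices L src" using vs_vertex[OF a] .
  have "gN i (Suc N) ?v = (\<Sum>\<alpha>\<in>Bset ?v (unit_deg i). exp (- r i) * gN i N (src \<alpha>))"
    unfolding gN_def R3[OF v]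
  proof (rule sum.cong[OF refl])
    fix \<alpha> assume "\<alpha> \<in> Bset ?v (unit_deg i)"
    then have "\<alpha> \<in> L" "deg \<alpha> = unit_deg i" unfolding Bset_def by auto
    then show "measure \<mu> (Z \<alpha> \<inter> {x. le_edeg (\<lambda>j. deg \<alpha> j + N * unit_deg i j) (fst x)}) =
      exp (- r i) * measure \<mu> (Gset (src \<alpha>) (\<lambda>j. N * unit_deg i j))" by (rule R2)
  qed
  also have "\<dots> = exp (- r i) * (\<Sum>\<alpha>\<in>Bset ?v (unit_deg i). gN i N (src \<alpha>))"
    by (simp add: sum_distrib_left)
  also have "(\<Sum>\<alpha>\<in>Bset ?v (unit_deg i). gN i N (src \<alpha>)) =
      (\<Sum>b<nV. real (card {\<beta>\<in>Bset ?v (unit_deg i). src \<beta> = vs ! b}) * gN i N (vs ! b))"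
    by (rule regroup) (use Bset_finite[OF FK] Bset_src in auto)
  also have "\<dots> = (\<Sum>b<nV. cnt i a b * gN i N (vs ! b))"
    using Bset_card[OF a] by simp
  finally show ?thesis .
qed

definition hZ :: "'k \<Rightarrow> 'm \<Rightarrow> real" where
  "hZ i w = measure \<mu> (Z w \<inter> {x. fst x i = \<infinity>})"

lemma le_edeg_N: "le_edeg (\<lambda>j. N * unit_deg i j) d \<longleftrightarrow> enat N \<le> d i"
proof
  assume "le_edeg (\<lambda>j. N * unit_deg i j) d"
  then have "enat (N * unit_deg i i) \<le> d i" unfolding le_edeg_def by blast
  then show "enat N \<le> d i" by (simp add: unit_deg_def)
next
  assume h: "enat N \<le> d i"
  show "le_edeg (\<lambda>j. N * unit_deg i j) d" unfolding le_edeg_def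
  proof
    fix j show "enat (N * unit_deg i j) \<le> d j"
      using h by (cases "j = i") (auto simp: unit_deg_def zero_enat_def[symmetric])
  qed
qed

lemma enat_all_le: "(\<forall>N. enat N \<le> y) \<longleftrightarrow> y = \<infinity>"
proof (cases y)
  case (enat k)
  then have "\<not> enat (Suc k) \<le> y" by simp
  then show ?thesis using enat by (auto intro!: exI[of _ "Suc k"])
qed simp

lemma gN_lim: assumes v: "v \<in> vertices L src"
  shows "(\<lambda>N. gN i N v) \<longlonglongrightarrow> hZ i v"
proof -
  let ?A = "\<lambda>N. Gset v (\<lambda>j. N * unit_deg i j)"
  have r: "range ?A \<subseteq> sets \<mu>" using Gset_sets[OF v] by auto
  have m: "antimono_on UNIV ?A"
  proof (rule monotone_onI)
    fix N M :: nat assume "N \<le> M"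
    then have "\<And>y. enat M \<le> y \<Longrightarrow> enat N \<le> y" using order_trans enat_ord_simps(1) by blast
    then show "?A N \<ge> ?A M" unfolding Gset_def le_edeg_N by auto
  qed
  have i: "\<Inter> (range ?A) = Z v \<inter> {x. fst x i = \<infinity>}"
    unfolding Gset_def le_edeg_N using enat_all_le by auto
  show ?thesis unfolding gN_def hZ_def
    using finite_measure.finite_Lim_measure_decseq[OF fin r m] i by simp
qed

lemma hZ_eigen: assumes a: "a < nV"
  shows "hZ i (vs ! a) = exp (- r i) * (\<Sum>b<nV. cnt i a b * hZ i (vs ! b))"
proof -
  have l1: "(\<lambda>N. gN i (Suc N) (vs ! a)) \<longlonglongrightarrow> hZ i (vs ! a)"
    using gN_lim[OF vs_vertex[OF a]] LIMSEQ_Suc by blast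
  have "(\<lambda>N. exp (- r i) * (\<Sum>b<nV. cnt i a b * gN i N (vs ! b))) \<longlonglongrightarrow> exp (- r i) * (\<Sum>b<nV. cnt i a b * hZ i (vs ! b))"
  proof (rule tendsto_mult_left, rule tendsto_sum)
    fix b assume "b \<in> {..<nV}"
    then have "b < nV" by simp
    show "(\<lambda>N. cnt i a b * gN i N (vs ! b)) \<longlonglongrightarrow> cnt i a b * hZ i (vs ! b)"
      by (rule tendsto_mult_left, rule gN_lim, rule vs_vertex) fact
  qed
  then have l2: "(\<lambda>N. gN i (Suc N) (vs ! a)) \<longlonglongrightarrow> exp (- r i) * (\<Sum>b<nV. cnt i a b * hZ i (vs ! b))"
    using gN_rec[OF a] by simp
  show ?thesis using LIMSEQ_unique[OF l1 l2] .
qed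

lemma edge_ineq': assumes a: "a < nV"
  shows "exp (- r i) * (\<Sum>b<nV. cnt i a b * mZ (vs ! b)) \<le> mZ (vs ! a)"
  using edge_ineq[OF a, of i] unfolding cnt_def .

end


lemma pow_entry:
  assumes A: "(A :: 'a :: comm_semiring_1 mat) \<in> carrier_mat n n" and a: "a < n" and b: "b < n"
  shows "(A ^\<^sub>m Suc N) $$ (a, b) = (\<Sum>c<n. (A ^\<^sub>m N) $$ (a, c) * A $$ (c, b))"
proof -
  have P: "A ^\<^sub>m N \<in> carrier_mat n n" using A by simp
  have "(A ^\<^sub>m Suc N) $$ (a, b) = row (A ^\<^sub>m N) a \<bullet> col A b" using P A a b by simp
  also have "\<dots> = (\<Sum>c<n. (A ^\<^sub>m N) $$ (a, c) * A $$ (c, b))"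
    unfolding scalar_prod_def using P A a b by (auto simp: atLeast0LessThan intro!: sum.cong)
  finally show ?thesis .
qed

lemma mult_vec_entry:
  assumes A: "(A :: 'a :: comm_semiring_1 mat) \<in> carrier_mat n n" and v: "v \<in> carrier_vec n" and a: "a < n"
  shows "(A *\<^sub>v v) $ a = (\<Sum>b<n. A $$ (a, b) * v $ b)"
  unfolding index_mult_mat_vec[of a A v, OF a[folded carrier_matD(1)[OF A]]] scalar_prod_def
  using A v a by (auto simp: atLeast0LessThan intro!: sum.cong)

lemma VM_carrier: "vertex_matrix L src rng deg i \<in> carrier_mat (length (vlist L src)) (length (vlist L src))"
  unfolding vertex_matrix_def Let_def by simp

lemma VM_index: "a < length (vlist L src) \<Longrightarrow> b < length (vlist L src) \<Longrightarrow>
  (vertex_matrix L src rng deg i :: 'a :: semiring_1 mat) $$ (a, b) =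
   of_nat (card {l\<in>L. rng l = vlist L src ! a \<and> deg l = unit_deg i \<and> src l = vlist L src ! b})"
  unfolding vertex_matrix_def Let_def by simp

context qi begin

abbreviation AR :: "'k \<Rightarrow> real mat" where "AR \<equiv> vertex_matrix L src rng deg"
abbreviation AC :: "'k \<Rightarrow> complex mat" where "AC \<equiv> vertex_matrix L src rng deg"

lemma AR_idx: "a < nV \<Longrightarrow> b < nV \<Longrightarrow> AR i $$ (a, b) = cnt i a b"
  unfolding cnt_def by (simp add: VM_index)

lemma AC_idx: "a < nV \<Longrightarrow> b < nV \<Longrightarrow> AC i $$ (a, b) = complex_of_real (cnt i a b)"
  unfolding cnt_def by (simp add: VM_index)

lemma cnt_nonneg: "cnt i a b \<ge> 0" unfolding cnt_def by simp

lemma pos_step: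
  assumes a: "a < nV" and b: "b < nV" and c: "cnt i a b > 0" and mb: "mZ (vs ! b) > 0"
  shows "mZ (vs ! a) > 0"
proof -
  have "0 < cnt i a b * mZ (vs ! b)" using c mb by simp
  also have "\<dots> \<le> (\<Sum>b'<nV. cnt i a b' * mZ (vs ! b'))"
    using b by (intro member_le_sum) (auto simp: cnt_nonneg)
  finally have "0 < exp (- r i) * (\<Sum>b'<nV. cnt i a b' * mZ (vs ! b'))" by simp
  then show ?thesis using edge_ineq'[OF a, of i] by linarith
qed

lemma pos_pow:
  assumes mb: "mZ (vs ! b) > 0" and b: "b < nV" and a: "a < nV" and p: "(AR i ^\<^sub>m N) $$ (a, b) > 0"
  shows "mZ (vs ! a) > 0"
  using mb b a p
proof (induction N arbitrary: b)
  case 0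
  then have "a = b" by (simp add: VM_carrier[THEN carrier_matD(1)] split: if_splits)
  then show ?case using 0 by simp
next
  case (Suc N)
  have "(AR i ^\<^sub>m Suc N) $$ (a, b) = (\<Sum>c<nV. (AR i ^\<^sub>m N) $$ (a, c) * AR i $$ (c, b))"
    by (rule pow_entry[OF VM_carrier a Suc.prems(2)])
  then have "0 < (\<Sum>c<nV. (AR i ^\<^sub>m N) $$ (a, c) * AR i $$ (c, b))"
    using Suc.prems(4) by simp
  then have "\<exists>c\<in>{..<nV}. 0 < (AR i ^\<^sub>m N) $$ (a, c) * AR i $$ (c, b)"
  proof (rule contrapos_pp)
    assume "\<not> (\<exists>c\<in>{..<nV}. 0 < (AR i ^\<^sub>m N) $$ (a, c) * AR i $$ (c, b))"
    then have "(\<Sum>c<nV. (AR i ^\<^sub>m N) $$ (a, c) * AR i $$ (c, b)) \<le> 0"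
      by (intro sum_nonpos) (auto simp: not_less)
    then show "\<not> 0 < (\<Sum>c<nV. (AR i ^\<^sub>m N) $$ (a, c) * AR i $$ (c, b))" by linarith
  qed
  then obtain c where c: "c < nV" "0 < (AR i ^\<^sub>m N) $$ (a, c) * AR i $$ (c, b)" by auto
  have cb: "AR i $$ (c, b) \<ge> 0" using AR_idx[OF c(1) Suc.prems(2)] cnt_nonneg by simp
  have p1: "AR i $$ (c, b) > 0" "(AR i ^\<^sub>m N) $$ (a, c) > 0"
    using c(2) cb by (auto simp: zero_less_mult_iff)
  have "mZ (vs ! c) > 0"
    using pos_step[OF c(1) Suc.prems(2) _ Suc.prems(1)] p1 AR_idx[OF c(1) Suc.prems(2)] by simp
  then show ?case using Suc.IH[OF _ c(1) a p1(2)] by simp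
qed

end


context qi begin

lemma AR_car: "AR i \<in> carrier_mat nV nV" by (rule VM_carrier)
lemma AC_car: "AC i \<in> carrier_mat nV nV" by (rule VM_carrier)

lemma W_cover: "W \<subseteq> (\<Union>a<nV. Z (vs ! a))"
proof
  fix x assume x: "x \<in> W"
  then have "snd x ((\<lambda>_. 0), (\<lambda>_. 0)) \<in> set vs" using W_Z0 vs_props by auto
  then obtain a where a: "a < nV" "vs ! a = snd x ((\<lambda>_. 0), (\<lambda>_. 0))" by (auto simp: in_set_conv_nth)
  then have "x \<in> Z (vs ! a)" using W_Z0[OF x] by simp
  then show "x \<in> (\<Union>a<nV. Z (vs ! a))" using a(1) by blast
qed

lemma exists_pos: "\<exists>b<nV. mZ (vs ! b) > 0"
proof (rule ccontr)
  assume "\<not> (\<exists>b<nV. mZ (vs ! b) > 0)"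
  then have z: "\<And>b. b < nV \<Longrightarrow> mZ (vs ! b) = 0" using measure_nonneg by (metis order_less_le)
  have s: "(\<Union>a<nV. Z (vs ! a)) \<in> sets \<mu>"
    using Z_sets vs_vertex vertex_deg by (intro sets.finite_UN) auto
  have "1 = measure \<mu> W" using prob_space.prob_space[OF PS] space_mu by simp
  also have "\<dots> \<le> measure \<mu> (\<Union>a<nV. Z (vs ! a))"
    by (rule finite_measure.finite_measure_mono[OF fin W_cover s])
  also have "\<dots> \<le> (\<Sum>a<nV. mZ (vs ! a))"
    using Z_sets vs_vertex vertex_deg by (intro measure_UNION_le) auto
  also have "\<dots> = 0" using z by simp
  finally show False by simp
qed

lemma nV_pos: "nV > 0" using exists_pos by auto

lemma all_pos:
  assumes irr: "irreducible_mat (AR i)" and a: "a < nV"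
  shows "mZ (vs ! a) > 0"
proof -
  obtain b where b: "b < nV" "mZ (vs ! b) > 0" using exists_pos by auto
  have "dim_row (AR i) = nV" using carrier_matD(1)[OF AR_car] by simp
  then have "\<exists>N\<ge>1. (AR i ^\<^sub>m N) $$ (a, b) > 0" using irr a b unfolding irreducible_mat_def by simp
  then obtain N where "(AR i ^\<^sub>m N) $$ (a, b) > 0" by blast
  then show ?thesis using pos_pow[OF b(2) b(1) a] by blast
qed

lemma eig_bound:
  assumes irr: "irreducible_mat (AR i)" and ev: "eigenvector (AC i) v lam"
  shows "cmod lam \<le> exp (r i)"
proof -
  have dr: "dim_row (AC i) = nV" using carrier_matD(1)[OF AC_car] by simp
  have v: "v \<in> carrier_vec nV" "v \<noteq> 0\<^sub>v nV" "AC i *\<^sub>v v = lam \<cdot>\<^sub>v v"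
    using ev unfolding eigenvector_def dr by auto
  have ent: "\<And>a. a < nV \<Longrightarrow> lam * v $ a = (\<Sum>b<nV. complex_of_real (cnt i a b) * v $ b)"
  proof -
    fix a assume a: "a < nV"
    have "(AC i *\<^sub>v v) $ a = (\<Sum>b<nV. AC i $$ (a, b) * v $ b)"
      by (rule mult_vec_entry[OF VM_carrier v(1) a])
    also have "\<dots> = (\<Sum>b<nV. complex_of_real (cnt i a b) * v $ b)"
      using AC_idx a by simp
    finally show "lam * v $ a = (\<Sum>b<nV. complex_of_real (cnt i a b) * v $ b)"
      using v(3) v(1) a by simp
  qed
  let ?m = "\<lambda>b. mZ (vs ! b)"
  have mpos: "\<And>b. b < nV \<Longrightarrow> ?m b > 0" using all_pos[OF irr] by blast
  let ?q = "\<lambda>b. cmod (v $ b) / ?m b"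
  define t where "t = Max (?q ` {..<nV})"
  have fne: "finite (?q ` {..<nV})" "?q ` {..<nV} \<noteq> {}" using nV_pos by auto
  obtain a0 where a0: "a0 < nV" "?q a0 = t" using Max_in[OF fne] unfolding t_def by auto
  have qle: "\<And>b. b < nV \<Longrightarrow> cmod (v $ b) \<le> t * ?m b"
  proof -
    fix b assume b: "b < nV"
    have "?q b \<le> t" unfolding t_def using fne b by (intro Max_ge) auto
    then show "cmod (v $ b) \<le> t * ?m b" using mpos[OF b] by (simp add: divide_le_eq)
  qed
  obtain a1 where a1: "a1 < nV" "v $ a1 \<noteq> 0"
  proof (rule ccontr)
    assume "\<not> thesis"
    then have "\<And>a. a < nV \<Longrightarrow> v $ a = 0" using that by blast
    then have "v = 0\<^sub>v nV" using v(1) by (intro eq_vecI) auto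
    then show False using v(2) by simp
  qed
  have "0 < ?q a1" using a1 mpos[OF a1(1)] by simp
  also have "?q a1 \<le> t" unfolding t_def using fne a1 by (intro Max_ge) auto
  finally have tpos: "t > 0" .
  have va0: "cmod (v $ a0) = t * ?m a0" using a0 mpos[OF a0(1)] by (simp add: field_simps)
  have va0pos: "cmod (v $ a0) > 0" using va0 tpos mpos[OF a0(1)] by simp
  have ei: "(\<Sum>b<nV. cnt i a0 b * ?m b) \<le> exp (r i) * ?m a0"
  proof -
    have "exp (- r i) * (\<Sum>b<nV. cnt i a0 b * ?m b) \<le> ?m a0" by (rule edge_ineq'[OF a0(1)])
    then have "exp (r i) * (exp (- r i) * (\<Sum>b<nV. cnt i a0 b * ?m b)) \<le> exp (r i) * ?m a0"
      by (intro mult_left_mono) auto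
    then show ?thesis by (simp add: mult.assoc[symmetric] exp_minus field_simps)
  qed
  have "cmod lam * cmod (v $ a0) = cmod (\<Sum>b<nV. complex_of_real (cnt i a0 b) * v $ b)"
    by (subst norm_mult[symmetric], subst ent[OF a0(1)], rule refl)
  also have "\<dots> \<le> (\<Sum>b<nV. cmod (complex_of_real (cnt i a0 b) * v $ b))" by (rule norm_sum)
  also have "\<dots> = (\<Sum>b<nV. cnt i a0 b * cmod (v $ b))"
    by (intro sum.cong refl) (simp add: norm_mult cnt_nonneg)
  also have "\<dots> \<le> (\<Sum>b<nV. cnt i a0 b * (t * ?m b))"
    by (intro sum_mono mult_left_mono qle cnt_nonneg) auto
  also have "\<dots> = t * (\<Sum>b<nV. cnt i a0 b * ?m b)"
    by (simp add: sum_distrib_left algebra_simps)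
  also have "\<dots> \<le> t * (exp (r i) * ?m a0)" using ei tpos by (intro mult_left_mono) auto
  also have "\<dots> = exp (r i) * cmod (v $ a0)" using va0 by simp
  finally show ?thesis using va0pos by simp
qed

lemma part1:
  assumes irr: "irreducible_mat (AR i)" and rpos: "r i > 0"
  shows "ln (rho L src rng deg i) \<le> r i"
proof -
  have "spectral_radius (AC i) \<in> norm ` spectrum (AC i)"
    by (rule spectral_radius_mem_max(1)[OF VM_carrier nV_pos])
  then obtain lam where l: "eigenvalue (AC i) lam" "spectral_radius (AC i) = cmod lam"
    unfolding spectrum_def by auto
  obtain v where "eigenvector (AC i) v lam" using l(1) unfolding eigenvalue_def by auto
  then have le: "rho L src rng deg i \<le> exp (r i)" using eig_bound[OF irr] l(2) unfolding rho_def by simp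
  show ?thesis
  proof (cases "rho L src rng deg i > 0")
    case True
    then have "ln (rho L src rng deg i) \<le> ln (exp (r i))" using le by (intro ln_mono) auto
    then show ?thesis by simp
  next
    case False
    then have "rho L src rng deg i = 0" using l(2) unfolding rho_def by simp
    then show ?thesis using rpos by simp
  qed
qed

lemma Zinf_sets: assumes v: "v \<in> vertices L src" shows "Z v \<inter> {x. fst x i = \<infinity>} \<in> sets \<mu>"
proof -
  let ?A = "\<lambda>N. Gset v (\<lambda>j. N * unit_deg i j)"
  have i: "\<Inter> (range ?A) = Z v \<inter> {x. fst x i = \<infinity>}"
    unfolding Gset_def le_edeg_N using enat_all_le by auto
  have "\<Inter> (range ?A) \<in> sets \<mu>"
    by (rule sets.countable_INT') (use Gset_sets[OF v] in auto)
  then show ?thesis using i by simp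
qed

lemma part2:
  assumes irr: "irreducible_mat (AR i)" and rpos: "r i > 0"
    and nz: "emeasure \<mu> {x \<in> W. fst x i = \<infinity>} \<noteq> 0"
  shows "r i = ln (rho L src rng deg i)"
proof -
  let ?h = "\<lambda>a. hZ i (vs ! a)"
  have U: "{x \<in> W. fst x i = \<infinity>} \<subseteq> (\<Union>a<nV. Z (vs ! a) \<inter> {x. fst x i = \<infinity>})"
    using W_cover by auto
  have Us: "(\<Union>a<nV. Z (vs ! a) \<inter> {x. fst x i = \<infinity>}) \<in> sets \<mu>"
    using Zinf_sets vs_vertex by (intro sets.finite_UN) auto
  obtain a0 where a0: "a0 < nV" "?h a0 > 0"
  proof (rule ccontr)
    assume "\<not> thesis"
    then have z: "\<And>a. a < nV \<Longrightarrow> ?h a = 0" using that unfolding hZ_def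
      using measure_nonneg by (metis order_less_le)
    have "measure \<mu> (\<Union>a<nV. Z (vs ! a) \<inter> {x. fst x i = \<infinity>}) \<le> (\<Sum>a<nV. ?h a)"
      unfolding hZ_def using Zinf_sets vs_vertex by (intro measure_UNION_le) auto
    also have "\<dots> = 0" using z by simp
    finally have "measure \<mu> (\<Union>a<nV. Z (vs ! a) \<inter> {x. fst x i = \<infinity>}) = 0"
      using measure_nonneg by (metis order_antisym)
    then have "emeasure \<mu> (\<Union>a<nV. Z (vs ! a) \<inter> {x. fst x i = \<infinity>}) = 0"
      using finite_measure.emeasure_eq_measure[OF fin] by simp
    moreover have "emeasure \<mu> {x \<in> W. fst x i = \<infinity>} \<le> emeasure \<mu> (\<Union>a<nV. Z (vs ! a) \<inter> {x. fst x i = \<infinity>})"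
      by (rule emeasure_mono[OF U Us])
    ultimately show False using nz by simp
  qed
  define w where "w = vec nV (\<lambda>a. complex_of_real (?h a))"
  have wc: "w \<in> carrier_vec nV" unfolding w_def by simp
  have wnz: "w \<noteq> 0\<^sub>v nV"
  proof
    assume "w = 0\<^sub>v nV"
    then have "w $ a0 = 0" using a0 by simp
    then show False using a0 unfolding w_def by simp
  qed
  have "AC i *\<^sub>v w = complex_of_real (exp (r i)) \<cdot>\<^sub>v w"
  proof (rule eq_vecI)
    fix a assume "a < dim_vec (complex_of_real (exp (r i)) \<cdot>\<^sub>v w)"
    then have a: "a < nV" using wc by simp
    have "(AC i *\<^sub>v w) $ a = (\<Sum>b<nV. AC i $$ (a, b) * w $ b)"
      by (rule mult_vec_entry[OF VM_carrier wc a])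
    also have "\<dots> = (\<Sum>b<nV. complex_of_real (cnt i a b * ?h b))"
      using AC_idx a unfolding w_def by (intro sum.cong refl) simp
    also have "\<dots> = complex_of_real (\<Sum>b<nV. cnt i a b * ?h b)" by simp
    also have "(\<Sum>b<nV. cnt i a b * ?h b) = exp (r i) * ?h a"
      using hZ_eigen[OF a, of i] by (simp add: exp_minus field_simps)
    finally show "(AC i *\<^sub>v w) $ a = (complex_of_real (exp (r i)) \<cdot>\<^sub>v w) $ a"
      using a unfolding w_def by simp
  next
    show "dim_vec (AC i *\<^sub>v w) = dim_vec (complex_of_real (exp (r i)) \<cdot>\<^sub>v w)"
      using wc carrier_matD(1)[OF AC_car] by simp
  qed
  then have "eigenvector (AC i) w (complex_of_real (exp (r i)))"
    unfolding eigenvector_def using wc wnz carrier_matD(1)[OF AC_car] by simp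
  then have "complex_of_real (exp (r i)) \<in> spectrum (AC i)" unfolding spectrum_def eigenvalue_def by auto
  then have "cmod (complex_of_real (exp (r i))) \<le> spectral_radius (AC i)"
    using spectral_radius_mem_max(2)[OF VM_carrier nV_pos] by blast
  then have ge: "exp (r i) \<le> rho L src rng deg i" unfolding rho_def by simp
  then have "ln (exp (r i)) \<le> ln (rho L src rng deg i)"
    by (intro ln_mono) auto
  then show ?thesis using part1[OF irr rpos] by simp
qed

lemma Dinf_sets: "{x \<in> W. fst x i = \<infinity>} \<in> sets \<mu>"
proof -
  have "{x \<in> W. fst x i = \<infinity>} = (\<Union>a<nV. Z (vs ! a) \<inter> {x. fst x i = \<infinity>})"
    using W_cover Z_iff by auto
  moreover have "(\<Union>a<nV. Z (vs ! a) \<inter> {x. fst x i = \<infinity>}) \<in> sets \<mu>"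
    using Zinf_sets vs_vertex by (intro sets.finite_UN) auto
  ultimately show ?thesis by simp
qed

end


theorem lemmaB2:
  fixes L :: "'m set" and src rng :: "'m \<Rightarrow> 'm" and cmp :: "'m \<Rightarrow> 'm \<Rightarrow> 'm"
    and deg :: "'m \<Rightarrow> ('k::finite \<Rightarrow> nat)"
    and r :: "'k \<Rightarrow> real" and \<mu> :: "('k, 'm) kpath measure"
  assumes "kgraph L src rng cmp deg"
    and "finite_kgraph L deg"
    and "coord_irreducible L src rng deg"
    and "\<forall>i. r i > 0"
    and "borel_measure_on_W L src rng cmp deg \<mu>"
    and "prob_space \<mu>"
    and "emeasure \<mu> (WL L src rng cmp deg) \<noteq> 0"
    and "quasi_invariant L src rng cmp deg (dot_cocycle r) \<mu>"
  shows "(\<forall>i. r i \<ge> ln (rho L src rng deg i))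
    \<and> (\<forall>l. emeasure \<mu> {x \<in> WL L src rng cmp deg. fst x l = \<infinity>} \<noteq> 0
            \<longrightarrow> r l = ln (rho L src rng deg l))
    \<and> (emeasure \<mu> {x \<in> WL L src rng cmp deg. \<forall>j. fst x j = \<infinity>} \<noteq> 0
            \<longrightarrow> (\<forall>i. r i = ln (rho L src rng deg i)))"
proof -
  have Q: "qi L src rng cmp deg r \<mu>"
    unfolding qi_def qi_axioms_def kg_def using assms by auto
  interpret qi L src rng cmp deg r \<mu> by (rule Q)
  have irr: "\<And>i. irreducible_mat (AR i)" using assms(3) unfolding coord_irreducible_def by blast
  have p1: "\<forall>i. r i \<ge> ln (rho L src rng deg i)" using part1[OF irr] assms(4) by blast
  have p2: "\<forall>l. emeasure \<mu> {x \<in> WL L src rng cmp deg. fst x l = \<infinity>} \<noteq> 0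
            \<longrightarrow> r l = ln (rho L src rng deg l)" using part2[OF irr] assms(4) by blast
  have p3: "emeasure \<mu> {x \<in> WL L src rng cmp deg. \<forall>j. fst x j = \<infinity>} \<noteq> 0
            \<longrightarrow> (\<forall>i. r i = ln (rho L src rng deg i))"
  proof (intro impI allI)
    fix i assume nz: "emeasure \<mu> {x \<in> WL L src rng cmp deg. \<forall>j. fst x j = \<infinity>} \<noteq> 0"
    have "emeasure \<mu> {x \<in> WL L src rng cmp deg. \<forall>j. fst x j = \<infinity>} \<le> emeasure \<mu> {x \<in> WL L src rng cmp deg. fst x i = \<infinity>}"
      by (rule emeasure_mono[OF _ Dinf_sets]) auto
    then have "emeasure \<mu> {x \<in> WL L src rng cmp deg. fst x i = \<infinity>} \<noteq> 0" using nz by auto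
    then show "r i = ln (rho L src rng deg i)" using p2 by blast
  qed
  show ?thesis using p1 p2 p3 by blast
qed


end
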